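(* Let $n\geq 2$ and $1\leq\mu_0\leq\mu_1\leq\cdots\leq\mu_n$. There exists a small constant $0<\sigma_0<\sqrt{\sigma_*}$, depending only on $n$, such that if $h\in C^\infty(\overline\Omega,\mathrm{Sym}_n)$ satisfies $$\|h-h_*\|_0+\frac{\mu_0}{\mu_1}\leq 2\sigma_0,\qquad \|h\|_i\leq\mu_0^i\ \text{ for all } i\geq 1,$$ then for every $j\geq 0$ there exist $a^j=(a^j_1,\dots,a^j_{n_*})\in C^\infty(\overline\Omega,\mathbb{R}^{n_*})$ and $\mathcal{E}^j\in C^\infty(\overline\Omega,\mathrm{Sym}_n)$ such that $$h=\sum_{i=1}^{n_*}(a_i^j)^2\xi_i\otimes\xi_i+\sum_{i=1}^n\mu_i^{-2}\nabla a_i^j\otimes\nabla a_i^j+\mathcal{E}^j,$$ with $a_i^j\geq\sqrt{\sigma_*}$ for $i=1,\dots,n_*$, and for all $k\ge 0$, $$\|a^j\|_k\leq C\mu_0^k,\qquad \|\mathcal{E}^j\|_k\leq C(\mu_0\mu_1^{-1})^{2(j+1)}\mu_0^k,$$ where $C$ depends only on $n$ (and on $j,k$).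
   Context: $\Omega\subset\mathbb{R}^n$ is a bounded domain. $\mathrm{Sym}_n$ is the space of symmetric real $n\times n$ matrices, $n_*=n(n+1)/2$. $\{\xi_i\}_{i=1}^{n_*}=\{(e_i+e_j)/|e_i+e_j|:1\le i\le j\le n\}$ with $\xi_i=e_i$ for $i\le n$; $h_*=\sum_{i=1}^{n_*}\xi_i\otimes\xi_i$. $\sigma_*=\sigma_*(n)>0$ is a constant for which there exist linear maps $L_i:\mathrm{Sym}_n\to\mathbb{R}$ with $h=\sum_i L_i(h)\xi_i\otimes\xi_i$ for all $h\in\mathrm{Sym}_n$ and $L_i(h)\ge\sigma_*$ whenever $|h-h_*|\le 2\sigma_*$. Norms: $[f]_k=\sum_{|\beta|=k}\sup_\Omega|\nabla^\beta f|$, $\|f\|_k=\sum_{j\le k}[f]_j$. *)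

theory Defs
  imports "HOL-Analysis.Analysis"
begin

text \<open>A fixed enumeration of the coordinate index type; coordinate i (0-based) of R^n is coords ! i.\<close>
definition coords :: "'n::finite list" where
  "coords = (SOME xs. distinct xs \<and> set xs = UNIV)"

text \<open>Standard basis vector e_(i+1) of R^n (0-based index i).\<close>
definition ee :: "nat \<Rightarrow> real^'n::finite" where
  "ee i = axis (coords ! i) 1"

text \<open>Index set of the directions xi: pairs (i,j), i \<le> j < n (0-based); (i,i) is e_i.\<close>
definition Pairs :: "nat \<Rightarrow> (nat \<times> nat) set" where
  "Pairs n = {(i,j). i \<le> j \<and> j < n}"

definition xi :: "nat \<times> nat \<Rightarrow> real^'n::finite" where
  "xi P = (1 / norm (ee (fst P) + ee (snd P) :: real^'n)) *\<^sub>R (ee (fst P) + ee (snd P))"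

definition outer :: "real^'n \<Rightarrow> real^'n \<Rightarrow> real^'n^'n" where
  "outer u v = (\<chi> p q. u $ p * v $ q)"

definition hstar :: "real^'n::finite^'n" where
  "hstar = (\<Sum>P\<in>Pairs CARD('n). outer (xi P) (xi P))"

definition partial :: "'n::finite \<Rightarrow> (real^'n \<Rightarrow> real) \<Rightarrow> real^'n \<Rightarrow> real" where
  "partial p f x = deriv (\<lambda>t. f (x + t *\<^sub>R axis p 1)) 0"

fun Dl :: "'n::finite list \<Rightarrow> (real^'n \<Rightarrow> real) \<Rightarrow> real^'n \<Rightarrow> real" where
  "Dl [] f = f"
| "Dl (p # ds) f = partial p (Dl ds f)"

definition Dm :: "('n::finite \<Rightarrow> nat) \<Rightarrow> (real^'n \<Rightarrow> real) \<Rightarrow> real^'n \<Rightarrow> real" where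
  "Dm \<beta> f = Dl (concat (map (\<lambda>p. replicate (\<beta> p) p) coords)) f"

definition grad :: "(real^'n::finite \<Rightarrow> real) \<Rightarrow> real^'n \<Rightarrow> real^'n" where
  "grad f x = (\<chi> p. partial p f x)"

definition MI :: "nat \<Rightarrow> ('n::finite \<Rightarrow> nat) set" where
  "MI k = {\<beta>. sum \<beta> UNIV = k}"

text \<open>C^infinity(closure Omega): all iterated partial derivatives exist (differentiable) on the
  open set Omega and extend continuously to the closure (= uniformly continuous on bounded Omega).\<close>
definition smooth_cl :: "(real^'n::finite) set \<Rightarrow> (real^'n \<Rightarrow> real) \<Rightarrow> bool" where
  "smooth_cl \<Omega> f \<longleftrightarrow> (\<forall>ds. Dl ds f differentiable_on \<Omega> \<and> uniformly_continuous_on \<Omega> (Dl ds f))"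

definition semi :: "(real^'n::finite) set \<Rightarrow> 'j set \<Rightarrow> ('j \<Rightarrow> real^'n \<Rightarrow> real) \<Rightarrow> nat \<Rightarrow> real" where
  "semi \<Omega> J F k = (\<Sum>\<beta>\<in>MI k. (SUP x\<in>\<Omega>. sqrt (\<Sum>j\<in>J. (Dm \<beta> (F j) x)\<^sup>2)))"

definition cnorm :: "(real^'n::finite) set \<Rightarrow> 'j set \<Rightarrow> ('j \<Rightarrow> real^'n \<Rightarrow> real) \<Rightarrow> nat \<Rightarrow> real" where
  "cnorm \<Omega> J F k = (\<Sum>i\<le>k. semi \<Omega> J F i)"

text \<open>Entries of a matrix-valued function, as a family indexed by 'n \<times> 'n (Frobenius norm).\<close>
definition ents :: "(real^'n \<Rightarrow> real^'n^'n) \<Rightarrow> ('n \<times> 'n) \<Rightarrow> real^'n \<Rightarrow> real" where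
  "ents h = (\<lambda>(p,q) x. h x $ p $ q)"

text \<open>The defining property of sigma_* (norm on matrices: Frobenius = library norm on real^'n^'n).\<close>
definition sigma_star_prop :: "'n::finite itself \<Rightarrow> real \<Rightarrow> bool" where
  "sigma_star_prop _ \<sigma> \<longleftrightarrow> \<sigma> > 0 \<and>
     (\<exists>L :: nat \<times> nat \<Rightarrow> real^'n^'n \<Rightarrow> real.
        (\<forall>P\<in>Pairs CARD('n). linear (L P)) \<and>
        (\<forall>H. transpose H = H \<longrightarrow> H = (\<Sum>P\<in>Pairs CARD('n). L P H *\<^sub>R outer (xi P) (xi P))) \<and>
        (\<forall>H. transpose H = H \<and> norm (H - (hstar :: real^'n^'n)) \<le> 2 * \<sigma> \<longrightarrow>
              (\<forall>P\<in>Pairs CARD('n). L P H \<ge> \<sigma>)))"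

end

theory Submission
  imports Defs
begin

lemma Dl_append: "Dl (ds @ es) f = Dl ds (Dl es f)"
  by (induction ds) auto

lemma Dl_snoc: "Dl (ds @ [p]) f = Dl ds (partial p f)"
  by (simp add: Dl_append)

lemma partial_has_real:
  fixes f :: "real^'n::finite \<Rightarrow> real"
  assumes "(f has_derivative f') (at z)" and that: "z = y + s0 *\<^sub>R axis p 1"
  shows "((\<lambda>s. f (y + s *\<^sub>R axis p 1)) has_real_derivative f' (axis p 1)) (at s0)"
proof -
  have "((\<lambda>s. y + s *\<^sub>R axis p (1::real)) has_derivative (\<lambda>s. s *\<^sub>R axis p 1)) (at s0)"
    by (auto intro!: derivative_eq_intros)
  then have "((\<lambda>s. f (y + s *\<^sub>R axis p 1)) has_derivative (\<lambda>s. f' (s *\<^sub>R axis p 1))) (at s0)"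
    using has_derivative_compose[of "\<lambda>s. y + s *\<^sub>R axis p (1::real)" _ s0 UNIV f f'] assms that
    by (simp add: o_def)
  moreover have "(\<lambda>s. f' (s *\<^sub>R axis p 1)) = (\<lambda>s. f' (axis p 1) * s)"
    using assms has_derivative_linear linear_cmul by fastforce
  ultimately show ?thesis by (simp add: has_field_derivative_def)
qed

lemma partial_eq:
  fixes f :: "real^'n::finite \<Rightarrow> real"
  assumes "(f has_derivative f') (at x)"
  shows "partial p f x = f' (axis p 1)"
  unfolding partial_def
  by (rule DERIV_imp_deriv, rule partial_has_real[OF assms]) simp

lemma partial_real:
  fixes f :: "real^'n::finite \<Rightarrow> real"
  assumes "f differentiable (at x)"
  shows "((\<lambda>s. f (x + s *\<^sub>R axis p 1)) has_real_derivative partial p f x) (at 0)"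
proof -
  obtain f' where f': "(f has_derivative f') (at x)" using assms unfolding differentiable_def by blast
  show ?thesis using partial_has_real[OF f', of x 0 p] partial_eq[OF f'] by simp
qed

lemma partial_local:
  assumes "open S" "x \<in> S" "\<And>y. y \<in> S \<Longrightarrow> f y = g y"
  shows "partial p f x = partial p g x"
  unfolding partial_def
proof (rule deriv_cong_ev[OF _ refl])
  have "open ((\<lambda>t::real. x + t *\<^sub>R axis p 1) -` S)"
    by (rule open_vimage[OF assms(1)], intro continuous_intros)
  then have "open {t::real. x + t *\<^sub>R axis p 1 \<in> S}" by (simp add: vimage_def)
  moreover have "0 \<in> {t::real. x + t *\<^sub>R axis p 1 \<in> S}" using assms by simp
  ultimately show "\<forall>\<^sub>F t in nhds 0. f (x + t *\<^sub>R axis p 1) = g (x + t *\<^sub>R axis p 1)"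
    unfolding eventually_nhds using assms by blast
qed

lemma Dl_local:
  assumes "open S" "x \<in> S" "\<And>y. y \<in> S \<Longrightarrow> f y = g y"
  shows "Dl ds f x = Dl ds g x"
  using assms(2)
proof (induction ds arbitrary: x)
  case Nil then show ?case using assms by simp
next
  case (Cons p ds)
  show ?case using partial_local[OF assms(1) Cons.prems, of "Dl ds f" "Dl ds g"] Cons.IH by simp
qed

lemma Dl_const: "Dl ds (\<lambda>x. c) = (if ds = [] then (\<lambda>x. c) else (\<lambda>x. 0))"
  by (induction ds) (auto simp: partial_def)

lemma partial_chain:
  fixes f :: "real^'n::finite \<Rightarrow> real"
  assumes "f differentiable (at x)" "DERIV \<phi> (f x) :> d"
  shows "partial p (\<lambda>y. \<phi> (f y)) x = d * partial p f x"
proof -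
  have "(\<phi> has_real_derivative d) (at ((\<lambda>s. f (x + s *\<^sub>R axis p 1)) 0))" using assms(2) by simp
  from DERIV_chain2[OF this partial_real[OF assms(1), of p]]
  have D: "((\<lambda>s. \<phi> (f (x + s *\<^sub>R axis p 1))) has_real_derivative d * partial p f x) (at 0)" .
  show ?thesis by (simp only: partial_def[of p "\<lambda>y. \<phi> (f y)"]) (rule DERIV_imp_deriv[OF D])
qed

lemma partial_mult:
  fixes f :: "real^'n::finite \<Rightarrow> real"
  assumes "f differentiable (at x)" "g differentiable (at x)"
  shows "partial p (\<lambda>y. f y * g y) x = partial p f x * g x + f x * partial p g x"
proof -
  have D: "((\<lambda>s. f (x + s *\<^sub>R axis p 1) * g (x + s *\<^sub>R axis p 1)) has_real_derivative partial p f x * g x + f x * partial p g x) (at 0)"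
    using DERIV_mult[OF partial_real[OF assms(1), of p] partial_real[OF assms(2), of p]] by (simp add: mult.commute)
  show ?thesis by (simp only: partial_def[of p "\<lambda>y. f y * g y"]) (rule DERIV_imp_deriv[OF D])
qed

lemma uc_cong:
  fixes f g :: "'a::metric_space \<Rightarrow> 'b::metric_space"
  assumes "uniformly_continuous_on S f" "\<And>y. y \<in> S \<Longrightarrow> f y = g y"
  shows "uniformly_continuous_on S g"
  unfolding uniformly_continuous_on_def
proof (intro allI impI)
  fix e :: real assume "e > 0"
  then obtain d where "d > 0" "\<forall>x\<in>S. \<forall>x'\<in>S. dist x' x < d \<longrightarrow> dist (f x') (f x) < e"
    using assms(1) unfolding uniformly_continuous_on_def by blast
  then show "\<exists>d>0. \<forall>x\<in>S. \<forall>x'\<in>S. dist x' x < d \<longrightarrow> dist (g x') (g x) < e"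
    using assms(2) by (intro exI[of _ d]) auto
qed

lemma uc_mult:
  fixes f g :: "'a::metric_space \<Rightarrow> real"
  assumes "uniformly_continuous_on S f" "uniformly_continuous_on S g"
    and "\<And>y. y \<in> S \<Longrightarrow> \<bar>f y\<bar> \<le> B" "\<And>y. y \<in> S \<Longrightarrow> \<bar>g y\<bar> \<le> B"
  shows "uniformly_continuous_on S (\<lambda>y. f y * g y)"
  unfolding uniformly_continuous_on_def
proof (intro allI impI)
  fix e :: real assume e: "e > 0"
  define B' where "B' = \<bar>B\<bar> + 1"
  have B': "B' > 0" unfolding B'_def by simp
  obtain d1 where d1: "d1 > 0" "\<forall>x\<in>S. \<forall>x'\<in>S. dist x' x < d1 \<longrightarrow> dist (f x') (f x) < e / (2*B')"
    using assms(1)[unfolded uniformly_continuous_on_def, rule_format, of "e / (2*B')"] e B' by auto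
  obtain d2 where d2: "d2 > 0" "\<forall>x\<in>S. \<forall>x'\<in>S. dist x' x < d2 \<longrightarrow> dist (g x') (g x) < e / (2*B')"
    using assms(2)[unfolded uniformly_continuous_on_def, rule_format, of "e / (2*B')"] e B' by auto
  show "\<exists>d>0. \<forall>x\<in>S. \<forall>x'\<in>S. dist x' x < d \<longrightarrow> dist (f x' * g x') (f x * g x) < e"
  proof (intro exI[of _ "min d1 d2"] conjI ballI impI)
    show "min d1 d2 > 0" using d1 d2 by simp
    fix x x' assume xs: "x \<in> S" "x' \<in> S" and dd: "dist x' x < min d1 d2"
    have a: "\<bar>f x' - f x\<bar> < e / (2*B')" using d1 xs dd by (auto simp: dist_real_def)
    have b: "\<bar>g x' - g x\<bar> < e / (2*B')" using d2 xs dd by (auto simp: dist_real_def)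
    have gb: "\<bar>g x'\<bar> \<le> B'" "\<bar>f x\<bar> \<le> B'" using assms(3,4) xs unfolding B'_def by force+
    have eq: "f x' * g x' - f x * g x = (f x' - f x) * g x' + f x * (g x' - g x)" by (simp add: algebra_simps)
    have t1: "\<bar>f x' - f x\<bar> * \<bar>g x'\<bar> \<le> (e / (2*B')) * B'"
      using a gb by (intro mult_mono) auto
    have t2a: "\<bar>f x\<bar> * \<bar>g x' - g x\<bar> \<le> B' * \<bar>g x' - g x\<bar>"
      using gb by (intro mult_right_mono) auto
    have t2b: "B' * \<bar>g x' - g x\<bar> < B' * (e / (2*B'))"
      using b B' by (intro mult_strict_left_mono) auto
    have e2: "(e / (2*B')) * B' = e/2" "B' * (e / (2*B')) = e/2" using B' by (auto simp: field_simps)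
    have "\<bar>f x' * g x' - f x * g x\<bar> \<le> \<bar>f x' - f x\<bar> * \<bar>g x'\<bar> + \<bar>f x\<bar> * \<bar>g x' - g x\<bar>"
      unfolding eq by (metis abs_mult abs_triangle_ineq)
    then show "dist (f x' * g x') (f x * g x) < e"
      using t1 t2a t2b e2 by (simp add: dist_real_def)
  qed
qed

lemma diff_on_cong:
  fixes f :: "real^'n::finite \<Rightarrow> real"
  assumes "open S" "f differentiable_on S" "\<And>y. y \<in> S \<Longrightarrow> f y = g y"
  shows "g differentiable_on S"
  using assms unfolding differentiable_on_eq_differentiable_at[OF assms(1)] differentiable_def
  using has_derivative_transform_within_open by blast

lemma partial_add:
  fixes f :: "real^'n::finite \<Rightarrow> real"
  assumes "f differentiable (at x)" "g differentiable (at x)"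
  shows "partial p (\<lambda>y. f y + g y) x = partial p f x + partial p g x"
proof -
  have D: "((\<lambda>s. f (x + s *\<^sub>R axis p 1) + g (x + s *\<^sub>R axis p 1)) has_real_derivative partial p f x + partial p g x) (at 0)"
    using DERIV_add[OF partial_real[OF assms(1), of p] partial_real[OF assms(2), of p]] by simp
  show ?thesis by (simp only: partial_def[of p "\<lambda>y. f y + g y"]) (rule DERIV_imp_deriv[OF D])
qed

lemma partial_sum:
  fixes f :: "'i \<Rightarrow> real^'n::finite \<Rightarrow> real"
  assumes "finite I" "\<And>i. i \<in> I \<Longrightarrow> f i differentiable (at x)"
  shows "partial p (\<lambda>y. \<Sum>i\<in>I. f i y) x = (\<Sum>i\<in>I. partial p (f i) x)"
proof -
  have D: "((\<lambda>s. \<Sum>i\<in>I. f i (x + s *\<^sub>R axis p 1)) has_real_derivative (\<Sum>i\<in>I. partial p (f i) x)) (at 0)"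
    by (rule DERIV_sum) (use partial_real assms(2) in blast)
  show ?thesis by (simp only: partial_def[of p "\<lambda>y. \<Sum>i\<in>I. f i y"]) (rule DERIV_imp_deriv[OF D])
qed

lemma partial_cmult:
  fixes f :: "real^'n::finite \<Rightarrow> real"
  assumes "f differentiable (at x)"
  shows "partial p (\<lambda>y. c * f y) x = c * partial p f x"
  using partial_chain[OF assms, of "\<lambda>z. c * z" c p] by (auto intro!: derivative_eq_intros)

lemma partial_sum_list:
  fixes F :: "'i \<Rightarrow> real^'n::finite \<Rightarrow> real"
  assumes "\<And>i. i \<in> set L \<Longrightarrow> F i differentiable (at x)"
  shows "partial p (\<lambda>y. sum_list (map (\<lambda>i. F i y) L)) x = sum_list (map (\<lambda>i. partial p (F i) x) L)"
  using assms
proof (induction L)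
  case Nil then show ?case using partial_cmult[of "\<lambda>y. 0" x p 0] by simp
next
  case (Cons a L)
  have d: "(\<lambda>y. sum_list (map (\<lambda>i. F i y) L)) differentiable (at x)"
    using Cons.prems
  proof (induction L)
    case Nil then show ?case by simp
  next
    case (Cons b L) then show ?case by (auto intro!: differentiable_add)
  qed
  show ?case using partial_add[OF Cons.prems[of a] d, of p] Cons by simp
qed

fun splits :: "'a list \<Rightarrow> ('a list \<times> 'a list) list" where
  "splits [] = [([],[])]"
| "splits (p#ds) = map (\<lambda>ab. (p # fst ab, snd ab)) (splits ds) @ map (\<lambda>ab. (fst ab, p # snd ab)) (splits ds)"

lemma length_splits: "length (splits ds) = 2 ^ length ds"
  by (induction ds) auto

lemma splits_len: "ab \<in> set (splits ds) \<Longrightarrow> length (fst ab) + length (snd ab) = length ds"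
  by (induction ds arbitrary: ab) auto

lemma sum_list_map_add: "sum_list (map (\<lambda>i. F i + G i :: real) L) = sum_list (map F L) + sum_list (map G L)"
  by (induction L) (auto simp: add_ac)

lemma leibniz:
  fixes f g :: "real^'n::finite \<Rightarrow> real"
  assumes S: "open S" and x: "x \<in> S"
    and df: "\<And>a. length a < length ds \<Longrightarrow> Dl a f differentiable_on S"
    and dg: "\<And>a. length a < length ds \<Longrightarrow> Dl a g differentiable_on S"
  shows "Dl ds (\<lambda>y. f y * g y) x = sum_list (map (\<lambda>ab. Dl (fst ab) f x * Dl (snd ab) g x) (splits ds))"
  using x df dg
proof (induction ds arbitrary: x)
  case Nil then show ?case by simp
next
  case (Cons p ds)
  have IH: "\<And>y. y \<in> S \<Longrightarrow> Dl ds (\<lambda>y. f y * g y) y = sum_list (map (\<lambda>ab. Dl (fst ab) f y * Dl (snd ab) g y) (splits ds))"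
    using Cons.IH Cons.prems by simp
  have dif: "\<And>a. length a \<le> length ds \<Longrightarrow> Dl a f differentiable (at x) \<and> Dl a g differentiable (at x)"
    using Cons.prems S by (auto simp: differentiable_on_eq_differentiable_at)
  have "Dl (p#ds) (\<lambda>y. f y * g y) x = partial p (\<lambda>y. sum_list (map (\<lambda>ab. Dl (fst ab) f y * Dl (snd ab) g y) (splits ds))) x"
    using partial_local[OF S Cons.prems(1) IH] by simp
  also have "\<dots> = sum_list (map (\<lambda>ab. partial p (\<lambda>y. Dl (fst ab) f y * Dl (snd ab) g y) x) (splits ds))"
    by (rule partial_sum_list) (use dif splits_len in \<open>fastforce intro!: differentiable_mult\<close>)
  also have "\<dots> = sum_list (map (\<lambda>ab. Dl (p # fst ab) f x * Dl (snd ab) g x + Dl (fst ab) f x * Dl (p # snd ab) g x) (splits ds))"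
    by (rule arg_cong[where f=sum_list], rule map_cong[OF refl], subst partial_mult)
       (use dif splits_len in \<open>fastforce+\<close>)
  also have "\<dots> = sum_list (map (\<lambda>ab. Dl (fst ab) f x * Dl (snd ab) g x) (splits (p#ds)))"
    by (simp add: sum_list_map_add o_def)
  finally show ?case .
qed

lemma Dl_sum:
  fixes f :: "'i \<Rightarrow> real^'n::finite \<Rightarrow> real"
  assumes S: "open S" and x: "x \<in> S" and I: "finite I"
    and df: "\<And>i a. i \<in> I \<Longrightarrow> length a < length ds \<Longrightarrow> Dl a (f i) differentiable_on S"
  shows "Dl ds (\<lambda>y. \<Sum>i\<in>I. f i y) x = (\<Sum>i\<in>I. Dl ds (f i) x)"
  using x df
proof (induction ds arbitrary: x)
  case Nil then show ?case by simp
next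
  case (Cons p ds)
  have IH: "\<And>y. y \<in> S \<Longrightarrow> Dl ds (\<lambda>y. \<Sum>i\<in>I. f i y) y = (\<Sum>i\<in>I. Dl ds (f i) y)"
    using Cons.IH Cons.prems by simp
  have "Dl (p#ds) (\<lambda>y. \<Sum>i\<in>I. f i y) x = partial p (\<lambda>y. \<Sum>i\<in>I. Dl ds (f i) y) x"
    using partial_local[OF S Cons.prems(1) IH] by simp
  also have "\<dots> = (\<Sum>i\<in>I. partial p (Dl ds (f i)) x)"
    by (rule partial_sum[OF I]) (use Cons.prems S in \<open>auto simp: differentiable_on_eq_differentiable_at\<close>)
  finally show ?case by simp
qed

lemma Dl_add:
  fixes f g :: "real^'n::finite \<Rightarrow> real"
  assumes S: "open S" and x: "x \<in> S"
    and df: "\<And>a. length a < length ds \<Longrightarrow> Dl a f differentiable_on S"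
    and dg: "\<And>a. length a < length ds \<Longrightarrow> Dl a g differentiable_on S"
  shows "Dl ds (\<lambda>y. f y + g y) x = Dl ds f x + Dl ds g x"
  using x df dg
proof (induction ds arbitrary: x)
  case Nil then show ?case by simp
next
  case (Cons p ds)
  have IH: "\<And>y. y \<in> S \<Longrightarrow> Dl ds (\<lambda>y. f y + g y) y = Dl ds f y + Dl ds g y"
    using Cons.IH Cons.prems by simp
  have "Dl (p#ds) (\<lambda>y. f y + g y) x = partial p (\<lambda>y. Dl ds f y + Dl ds g y) x"
    using partial_local[OF S Cons.prems(1) IH] by simp
  also have "\<dots> = partial p (Dl ds f) x + partial p (Dl ds g) x"
    by (rule partial_add) (use Cons.prems S in \<open>auto simp: differentiable_on_eq_differentiable_at\<close>)
  finally show ?case by simp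
qed

lemma Dl_cmult:
  fixes f :: "real^'n::finite \<Rightarrow> real"
  assumes S: "open S" and x: "x \<in> S"
    and df: "\<And>a. length a < length ds \<Longrightarrow> Dl a f differentiable_on S"
  shows "Dl ds (\<lambda>y. c * f y) x = c * Dl ds f x"
  using x df
proof (induction ds arbitrary: x)
  case Nil then show ?case by simp
next
  case (Cons p ds)
  have IH: "\<And>y. y \<in> S \<Longrightarrow> Dl ds (\<lambda>y. c * f y) y = c * Dl ds f y"
    using Cons.IH Cons.prems by simp
  have "Dl (p#ds) (\<lambda>y. c * f y) x = partial p (\<lambda>y. c * Dl ds f y) x"
    using partial_local[OF S Cons.prems(1) IH] by simp
  also have "\<dots> = c * partial p (Dl ds f) x"
    by (rule partial_cmult) (use Cons.prems S in \<open>auto simp: differentiable_on_eq_differentiable_at\<close>)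
  finally show ?case by simp
qed

lemma diff_on_sum_list:
  fixes F :: "'i \<Rightarrow> real^'n::finite \<Rightarrow> real"
  assumes "\<And>i. i \<in> set L \<Longrightarrow> F i differentiable_on S"
  shows "(\<lambda>y. sum_list (map (\<lambda>i. F i y) L)) differentiable_on S"
  using assms by (induction L) (auto intro!: differentiable_on_add)

lemma uc_sum_list:
  fixes F :: "'i \<Rightarrow> real^'n::finite \<Rightarrow> real"
  assumes "\<And>i. i \<in> set L \<Longrightarrow> uniformly_continuous_on S (F i)"
  shows "uniformly_continuous_on S (\<lambda>y. sum_list (map (\<lambda>i. F i y) L))"
  using assms by (induction L) (auto intro!: uniformly_continuous_on_add uniformly_continuous_on_const)

lemma abs_sum_list_le:
  fixes F :: "'i \<Rightarrow> real"
  assumes "\<And>i. i \<in> set L \<Longrightarrow> \<bar>F i\<bar> \<le> B"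
  shows "\<bar>sum_list (map F L)\<bar> \<le> real (length L) * B"
  using assms
proof (induction L)
  case Nil then show ?case by simp
next
  case (Cons a L)
  have "\<bar>sum_list (map F (a#L))\<bar> \<le> \<bar>F a\<bar> + \<bar>sum_list (map F L)\<bar>" by (simp add: abs_triangle_ineq)
  also have "\<dots> \<le> B + real (length L) * B" using Cons by (intro add_mono) auto
  finally show ?case by (simp add: algebra_simps)
qed

definition smm :: "(real^'n::finite) set \<Rightarrow> nat \<Rightarrow> (real^'n \<Rightarrow> real) \<Rightarrow> bool" where
  "smm S m f \<longleftrightarrow> (\<forall>ds. length ds \<le> m \<longrightarrow> Dl ds f differentiable_on S)"

definition ucm :: "(real^'n::finite) set \<Rightarrow> nat \<Rightarrow> (real^'n \<Rightarrow> real) \<Rightarrow> bool" where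
  "ucm S m f \<longleftrightarrow> (\<forall>ds. length ds \<le> m \<longrightarrow> uniformly_continuous_on S (Dl ds f))"

definition bdm :: "(real^'n::finite) set \<Rightarrow> real \<Rightarrow> nat \<Rightarrow> real \<Rightarrow> (nat \<Rightarrow> real) \<Rightarrow> (real^'n \<Rightarrow> real) \<Rightarrow> bool" where
  "bdm S W m s K f \<longleftrightarrow> (\<forall>ds x. length ds \<le> m \<longrightarrow> x \<in> S \<longrightarrow> \<bar>Dl ds f x\<bar> \<le> s * K (length ds) * W ^ length ds)"

definition gdm :: "(real^'n::finite) set \<Rightarrow> real \<Rightarrow> nat \<Rightarrow> real \<Rightarrow> (nat \<Rightarrow> real) \<Rightarrow> (real^'n \<Rightarrow> real) \<Rightarrow> bool" where
  "gdm S W m s K f \<longleftrightarrow> smm S m f \<and> ucm S m f \<and> bdm S W m s K f"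

definition gd :: "(real^'n::finite) set \<Rightarrow> real \<Rightarrow> real \<Rightarrow> (nat \<Rightarrow> real) \<Rightarrow> (real^'n \<Rightarrow> real) \<Rightarrow> bool" where
  "gd S W s K f \<longleftrightarrow> (\<forall>m. gdm S W m s K f)"

definition Kok :: "(nat \<Rightarrow> real) \<Rightarrow> bool" where
  "Kok K \<longleftrightarrow> mono K \<and> (\<forall>i. 0 \<le> K i)"

lemma Kok_nonneg: "Kok K \<Longrightarrow> 0 \<le> K i" by (simp add: Kok_def)
lemma Kok_mono: "Kok K \<Longrightarrow> i \<le> j \<Longrightarrow> K i \<le> K j" by (simp add: Kok_def mono_def)

lemma gdm_cong:
  assumes S: "open S" and eq: "\<And>y. y \<in> S \<Longrightarrow> f y = g y" and G: "gdm S W m s K f"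
  shows "gdm S W m s K g"
proof -
  have e: "\<And>ds y. y \<in> S \<Longrightarrow> Dl ds f y = Dl ds g y" using Dl_local[OF S, where f=f and g=g] eq by blast
  show ?thesis using G unfolding gdm_def smm_def ucm_def bdm_def
    using diff_on_cong[OF S] uc_cong e by metis
qed

lemma gdm_le: "gdm S W m s K f \<Longrightarrow> m' \<le> m \<Longrightarrow> gdm S W m' s K f"
  unfolding gdm_def smm_def ucm_def bdm_def by auto

lemma gdm_weaken:
  assumes "gdm S W m s K f" "s \<le> s'" "\<And>i. K i \<le> K' i" "0 \<le> s" "\<And>i. 0 \<le> K i" "0 \<le> W"
  shows "gdm S W m s' K' f"
proof -
  have "\<And>l. s * K l * W ^ l \<le> s' * K' l * W ^ l"
    using assms(2-6) by (intro mult_right_mono mult_mono) auto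
  then show ?thesis using assms(1) unfolding gdm_def bdm_def by (meson order_trans)
qed

lemma gdm_const: "0 \<le> W \<Longrightarrow> gdm S W m \<bar>c\<bar> (\<lambda>_. 1) (\<lambda>y. c)"
  unfolding gdm_def smm_def ucm_def bdm_def
  by (auto simp: Dl_const intro: uniformly_continuous_on_const)

lemma gdm_shift:
  assumes "gdm S W (Suc m) s K f"
  shows "gdm S W m (s * W) (\<lambda>i. K (Suc i)) (partial p f)"
proof -
  have e: "Dl ds (partial p f) = Dl (ds @ [p]) f" for ds by (simp add: Dl_snoc)
  have b: "\<bar>Dl ds (partial p f) x\<bar> \<le> s * W * K (Suc (length ds)) * W ^ length ds"
    if "length ds \<le> m" "x \<in> S" for ds x
  proof -
    have "\<bar>Dl (ds @ [p]) f x\<bar> \<le> s * K (length (ds @ [p])) * W ^ length (ds @ [p])"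
      using assms that unfolding gdm_def bdm_def by (metis Suc_le_mono length_append_singleton)
    then show ?thesis by (simp add: e algebra_simps)
  qed
  show ?thesis using assms b unfolding gdm_def smm_def ucm_def bdm_def e
    by auto
qed

lemma gdm_mult:
  fixes f g :: "real^'n::finite \<Rightarrow> real"
  assumes S: "open S" and W: "1 \<le> W" and s: "0 \<le> s1" "0 \<le> s2" and K: "Kok K1" "Kok K2"
    and F: "gdm S W m s1 K1 f" and G: "gdm S W m s2 K2 g"
  shows "gdm S W m (s1 * s2) (\<lambda>i. 2 ^ i * K1 i * K2 i) (\<lambda>y. f y * g y)"
proof -
  have fd: "\<And>a. length a \<le> m \<Longrightarrow> Dl a f differentiable_on S" and gd: "\<And>a. length a \<le> m \<Longrightarrow> Dl a g differentiable_on S"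
    using F G unfolding gdm_def smm_def by auto
  have fu: "\<And>a. length a \<le> m \<Longrightarrow> uniformly_continuous_on S (Dl a f)" and gu: "\<And>a. length a \<le> m \<Longrightarrow> uniformly_continuous_on S (Dl a g)"
    using F G unfolding gdm_def ucm_def by auto
  have fb: "\<And>a y. length a \<le> m \<Longrightarrow> y \<in> S \<Longrightarrow> \<bar>Dl a f y\<bar> \<le> s1 * K1 (length a) * W ^ length a"
   and gb: "\<And>a y. length a \<le> m \<Longrightarrow> y \<in> S \<Longrightarrow> \<bar>Dl a g y\<bar> \<le> s2 * K2 (length a) * W ^ length a"
    using F G unfolding gdm_def bdm_def by auto
  have fb': "\<bar>Dl a f y\<bar> \<le> s1 * K1 l * W ^ length a" if "length a \<le> l" "l \<le> m" "y \<in> S" for a l y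
  proof -
    have "s1 * K1 (length a) \<le> s1 * K1 l" using Kok_mono[OF K(1) that(1)] s by (simp add: mult_left_mono)
    then have "s1 * K1 (length a) * W ^ length a \<le> s1 * K1 l * W ^ length a" using W by (simp add: mult_right_mono)
    then show ?thesis using fb[of a y] that by linarith
  qed
  have gb': "\<bar>Dl a g y\<bar> \<le> s2 * K2 l * W ^ length a" if "length a \<le> l" "l \<le> m" "y \<in> S" for a l y
  proof -
    have "s2 * K2 (length a) \<le> s2 * K2 l" using Kok_mono[OF K(2) that(1)] s by (simp add: mult_left_mono)
    then have "s2 * K2 (length a) * W ^ length a \<le> s2 * K2 l * W ^ length a" using W by (simp add: mult_right_mono)
    then show ?thesis using gb[of a y] that by linarith
  qed
  define T where "T ds y = sum_list (map (\<lambda>ab. Dl (fst ab) f y * Dl (snd ab) g y) (splits ds))" for ds y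
  have L: "\<And>y. y \<in> S \<Longrightarrow> T ds y = Dl ds (\<lambda>y. f y * g y) y" if "length ds \<le> m" for ds
    unfolding T_def using leibniz[OF S _ fd gd] that by force
  have len: "\<And>ab. ab \<in> set (splits ds) \<Longrightarrow> length (fst ab) \<le> length ds \<and> length (snd ab) \<le> length ds" for ds
    using splits_len by fastforce
  have sm: "Dl ds (\<lambda>y. f y * g y) differentiable_on S" if "length ds \<le> m" for ds
  proof (rule diff_on_cong[OF S _ L[OF that]])
    show "T ds differentiable_on S" unfolding T_def
    proof (rule diff_on_sum_list, rule differentiable_on_mult)
      fix ab assume "ab \<in> set (splits ds)"
      then have "length (fst ab) \<le> m" "length (snd ab) \<le> m" using len that by (meson order_trans)+
      then show "Dl (fst ab) f differentiable_on S" "Dl (snd ab) g differentiable_on S" using fd gd by auto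
    qed
  qed
  have uc: "uniformly_continuous_on S (Dl ds (\<lambda>y. f y * g y))" if "length ds \<le> m" for ds
  proof (rule uc_cong[OF _ L[OF that]])
    define B where "B = s1 * K1 m * W ^ m + s2 * K2 m * W ^ m"
    have Wp: "W ^ l \<le> W ^ m" if "l \<le> m" for l using W that by (simp add: power_increasing)
    have p1: "0 \<le> s1 * K1 m" "0 \<le> s2 * K2 m" using s K by (auto simp: Kok_nonneg)
    have bf: "\<bar>Dl a f y\<bar> \<le> B" if "length a \<le> m" "y \<in> S" for a y
    proof -
      have "\<bar>Dl a f y\<bar> \<le> s1 * K1 m * W ^ length a" using fb'[OF that(1) order_refl that(2)] .
      also have "\<dots> \<le> s1 * K1 m * W ^ m" using Wp[OF that(1)] p1 by (simp add: mult_left_mono)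
      also have "\<dots> \<le> B" unfolding B_def using p1 W by simp
      finally show ?thesis .
    qed
    have bg: "\<bar>Dl a g y\<bar> \<le> B" if "length a \<le> m" "y \<in> S" for a y
    proof -
      have "\<bar>Dl a g y\<bar> \<le> s2 * K2 m * W ^ length a" using gb'[OF that(1) order_refl that(2)] .
      also have "\<dots> \<le> s2 * K2 m * W ^ m" using Wp[OF that(1)] p1 by (simp add: mult_left_mono)
      also have "\<dots> \<le> B" unfolding B_def using p1 W by simp
      finally show ?thesis .
    qed
    show "uniformly_continuous_on S (T ds)" unfolding T_def
    proof (rule uc_sum_list, rule uc_mult[where B=B])
      fix ab assume "ab \<in> set (splits ds)"
      then have l: "length (fst ab) \<le> m" "length (snd ab) \<le> m" using len that by (meson order_trans)+
      then show "uniformly_continuous_on S (Dl (fst ab) f)" "uniformly_continuous_on S (Dl (snd ab) g)" using fu gu by auto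
      show "\<And>y. y \<in> S \<Longrightarrow> \<bar>Dl (fst ab) f y\<bar> \<le> B" "\<And>y. y \<in> S \<Longrightarrow> \<bar>Dl (snd ab) g y\<bar> \<le> B"
        using bf[OF l(1)] bg[OF l(2)] by auto
    qed
  qed
  have bd: "\<bar>Dl ds (\<lambda>y. f y * g y) x\<bar> \<le> s1 * s2 * (2 ^ length ds * K1 (length ds) * K2 (length ds)) * W ^ length ds"
    if "length ds \<le> m" "x \<in> S" for ds x
  proof -
    let ?l = "length ds"
    have "\<bar>Dl (fst ab) f x * Dl (snd ab) g x\<bar> \<le> s1 * s2 * K1 ?l * K2 ?l * W ^ ?l" if ab: "ab \<in> set (splits ds)" for ab
    proof -
      have "\<bar>Dl (fst ab) f x * Dl (snd ab) g x\<bar> \<le> (s1 * K1 ?l * W ^ length (fst ab)) * (s2 * K2 ?l * W ^ length (snd ab))"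
        unfolding abs_mult using fb'[of "fst ab" ?l x] gb'[of "snd ab" ?l x] len[OF ab] \<open>?l \<le> m\<close> \<open>x \<in> S\<close>
        by (intro mult_mono) auto
      also have "\<dots> = s1 * s2 * K1 ?l * K2 ?l * W ^ (length (fst ab) + length (snd ab))"
        by (simp add: power_add)
      finally show ?thesis using splits_len[OF ab] by simp
    qed
    then have "\<bar>T ds x\<bar> \<le> real (length (splits ds)) * (s1 * s2 * K1 ?l * K2 ?l * W ^ ?l)"
      unfolding T_def by (intro abs_sum_list_le) auto
    then show ?thesis using L[OF that(1) that(2)] by (simp add: length_splits algebra_simps)
  qed
  show ?thesis unfolding gdm_def smm_def ucm_def bdm_def using sm uc bd by auto
qed

lemma gdm_sum:
  fixes f :: "'i \<Rightarrow> real^'n::finite \<Rightarrow> real"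
  assumes S: "open S" and I: "finite I" and s: "0 \<le> s"
    and F: "\<And>i. i \<in> I \<Longrightarrow> gdm S W m s (K i) (f i)"
  shows "gdm S W m s (\<lambda>l. \<Sum>i\<in>I. K i l) (\<lambda>y. \<Sum>i\<in>I. f i y)"
proof -
  have fd: "\<And>i a. i \<in> I \<Longrightarrow> length a \<le> m \<Longrightarrow> Dl a (f i) differentiable_on S"
    and fu: "\<And>i a. i \<in> I \<Longrightarrow> length a \<le> m \<Longrightarrow> uniformly_continuous_on S (Dl a (f i))"
    and fb: "\<And>i a y. i \<in> I \<Longrightarrow> length a \<le> m \<Longrightarrow> y \<in> S \<Longrightarrow> \<bar>Dl a (f i) y\<bar> \<le> s * K i (length a) * W ^ length a"
    using F unfolding gdm_def smm_def ucm_def bdm_def by auto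
  have L: "\<And>y. y \<in> S \<Longrightarrow> (\<Sum>i\<in>I. Dl ds (f i) y) = Dl ds (\<lambda>y. \<Sum>i\<in>I. f i y) y" if "length ds \<le> m" for ds
    using Dl_sum[OF S _ I, of _ ds f] fd that by force
  have sm: "Dl ds (\<lambda>y. \<Sum>i\<in>I. f i y) differentiable_on S" if "length ds \<le> m" for ds
  proof (rule diff_on_cong[OF S _ L[OF that]])
    show "(\<lambda>y. \<Sum>i\<in>I. Dl ds (f i) y) differentiable_on S"
      unfolding differentiable_on_def using fd that I by (auto intro!: differentiable_sum simp: differentiable_on_def)
  qed
  have uc: "uniformly_continuous_on S (Dl ds (\<lambda>y. \<Sum>i\<in>I. f i y))" if "length ds \<le> m" for ds
    by (rule uc_cong[OF _ L[OF that]], rule uniformly_continuous_on_sum) (use fu that in auto)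
  have bd: "\<bar>Dl ds (\<lambda>y. \<Sum>i\<in>I. f i y) x\<bar> \<le> s * (\<Sum>i\<in>I. K i (length ds)) * W ^ length ds"
    if "length ds \<le> m" "x \<in> S" for ds x
  proof -
    have "\<bar>\<Sum>i\<in>I. Dl ds (f i) x\<bar> \<le> (\<Sum>i\<in>I. \<bar>Dl ds (f i) x\<bar>)" by (rule sum_abs)
    also have "\<dots> \<le> (\<Sum>i\<in>I. s * K i (length ds) * W ^ length ds)"
      by (rule sum_mono) (use fb that in auto)
    also have "\<dots> = s * (\<Sum>i\<in>I. K i (length ds)) * W ^ length ds"
      by (simp add: sum_distrib_left sum_distrib_right)
    finally show ?thesis using L[OF that] by simp
  qed
  show ?thesis unfolding gdm_def smm_def ucm_def bdm_def using sm uc bd by auto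
qed

lemma gdm_add:
  fixes f g :: "real^'n::finite \<Rightarrow> real"
  assumes S: "open S" and s: "0 \<le> s" and F: "gdm S W m s K1 f" and G: "gdm S W m s K2 g"
  shows "gdm S W m s (\<lambda>l. K1 l + K2 l) (\<lambda>y. f y + g y)"
proof -
  have "gdm S W m s (\<lambda>l. \<Sum>i\<in>{True,False}. (if i then K1 else K2) l) (\<lambda>y. \<Sum>i\<in>{True,False}. (if i then f else g) y)"
    by (rule gdm_sum[OF S _ s]) (use F G in auto)
  then show ?thesis by simp
qed

lemma gdm_cmult:
  fixes f :: "real^'n::finite \<Rightarrow> real"
  assumes S: "open S" and F: "gdm S W m s K f"
  shows "gdm S W m (\<bar>c\<bar> * s) K (\<lambda>y. c * f y)"
proof -
  have fd: "\<And>a. length a \<le> m \<Longrightarrow> Dl a f differentiable_on S"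
    and fu: "\<And>a. length a \<le> m \<Longrightarrow> uniformly_continuous_on S (Dl a f)"
    and fb: "\<And>a y. length a \<le> m \<Longrightarrow> y \<in> S \<Longrightarrow> \<bar>Dl a f y\<bar> \<le> s * K (length a) * W ^ length a"
    using F unfolding gdm_def smm_def ucm_def bdm_def by auto
  have L: "\<And>y. y \<in> S \<Longrightarrow> c * Dl ds f y = Dl ds (\<lambda>y. c * f y) y" if "length ds \<le> m" for ds
    using Dl_cmult[OF S _ , of _ ds f c] fd that by force
  have sm: "Dl ds (\<lambda>y. c * f y) differentiable_on S" if "length ds \<le> m" for ds
    by (rule diff_on_cong[OF S _ L[OF that]]) (use fd that in \<open>auto intro!: differentiable_on_mult\<close>)
  have uc: "uniformly_continuous_on S (Dl ds (\<lambda>y. c * f y))" if "length ds \<le> m" for ds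
    by (rule uc_cong[OF _ L[OF that]], rule uniformly_continuous_on_cmul_left) (use fu that in auto)
  have bd: "\<bar>Dl ds (\<lambda>y. c * f y) x\<bar> \<le> \<bar>c\<bar> * s * K (length ds) * W ^ length ds"
    if "length ds \<le> m" "x \<in> S" for ds x
  proof -
    have "\<bar>c * Dl ds f x\<bar> \<le> \<bar>c\<bar> * (s * K (length ds) * W ^ length ds)"
      unfolding abs_mult using fb that by (intro mult_left_mono) auto
    then show ?thesis using L[OF that] by (simp add: algebra_simps)
  qed
  show ?thesis unfolding gdm_def smm_def ucm_def bdm_def using sm uc bd by auto
qed

lemma Kok_mult: "Kok K1 \<Longrightarrow> Kok K2 \<Longrightarrow> Kok (\<lambda>i. 2 ^ i * K1 i * K2 i)"
  unfolding Kok_def mono_def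
  by (auto intro!: mult_mono power_increasing)

lemma Kok_add: "Kok K1 \<Longrightarrow> Kok K2 \<Longrightarrow> Kok (\<lambda>i. K1 i + K2 i)"
  unfolding Kok_def mono_def by (auto intro!: add_mono)

lemma Kok_sum: "(\<And>j. j \<in> J \<Longrightarrow> Kok (K j)) \<Longrightarrow> Kok (\<lambda>i. \<Sum>j\<in>J. K j i)"
  unfolding Kok_def mono_def by (auto intro!: sum_mono sum_nonneg)

lemma Kok_cmult: "Kok K \<Longrightarrow> 0 \<le> c \<Longrightarrow> Kok (\<lambda>i. c * K i)"
  unfolding Kok_def mono_def by (auto intro!: mult_left_mono)

lemma Kok_const: "0 \<le> c \<Longrightarrow> Kok (\<lambda>i. c)"
  unfolding Kok_def mono_def by auto

lemma Kok_shift: "Kok K \<Longrightarrow> Kok (\<lambda>i. K (Suc i))"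
  unfolding Kok_def mono_def by auto

lemma gd_from_gdm: "(\<And>m. gdm S W m s K f) \<Longrightarrow> gd S W s K f" by (simp add: gd_def)

primrec odeK :: "real \<Rightarrow> (nat \<Rightarrow> real) \<Rightarrow> (nat \<Rightarrow> real) \<Rightarrow> nat \<Rightarrow> real" where
  "odeK c0 K1 K2 0 = c0"
| "odeK c0 K1 K2 (Suc m) = max (odeK c0 K1 K2 m) (2 ^ m * odeK c0 K1 K2 m * (2 ^ m * odeK c0 K1 K2 m * K1 m + K2 m))"

lemma Kok_odeK: "0 \<le> c0 \<Longrightarrow> Kok (odeK c0 K1 K2)"
proof -
  assume c: "0 \<le> c0"
  have m: "mono (odeK c0 K1 K2)" by (rule mono_iff_le_Suc[THEN iffD2]) simp
  have n: "0 \<le> odeK c0 K1 K2 i" for i using c by (induction i) (auto simp: le_max_iff_disj)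
  show ?thesis unfolding Kok_def using m n by auto
qed

lemma gdm_Suc:
  fixes F :: "real^'n::finite \<Rightarrow> real"
  assumes S: "open S" and F: "gdm S W m s K F" and P: "\<And>p. gdm S W m s' K' (\<Phi> p)"
    and eq: "\<And>p y. y \<in> S \<Longrightarrow> partial p F y = \<Phi> p y"
    and le: "s' * K' m * W ^ m \<le> s * K (Suc m) * W ^ Suc m"
  shows "gdm S W (Suc m) s K F"
proof -
  have key: "Dl ds F differentiable_on S \<and> uniformly_continuous_on S (Dl ds F) \<and>
      (\<forall>x\<in>S. \<bar>Dl ds F x\<bar> \<le> s * K (length ds) * W ^ length ds)" if "length ds \<le> Suc m" for ds
  proof (cases "length ds \<le> m")
    case True then show ?thesis using F unfolding gdm_def smm_def ucm_def bdm_def by auto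
  next
    case False
    then have "ds \<noteq> []" by auto
    then obtain ds' p where ds: "ds = ds' @ [p]" by (metis rev_exhaust)
    have lm: "length ds' = m" using False that ds by simp
    have L: "\<And>y. y \<in> S \<Longrightarrow> Dl ds' (\<Phi> p) y = Dl ds F y"
      unfolding ds Dl_snoc using Dl_local[OF S, where f="\<Phi> p" and g="partial p F"] eq by metis
    have Pd: "Dl ds' (\<Phi> p) differentiable_on S" "uniformly_continuous_on S (Dl ds' (\<Phi> p))"
      and Pb: "\<And>x. x \<in> S \<Longrightarrow> \<bar>Dl ds' (\<Phi> p) x\<bar> \<le> s' * K' m * W ^ m"
      using P[of p] lm unfolding gdm_def smm_def ucm_def bdm_def by auto
    show ?thesis
    proof (intro conjI ballI)
      show "Dl ds F differentiable_on S" by (rule diff_on_cong[OF S Pd(1) L])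
      show "uniformly_continuous_on S (Dl ds F)" by (rule uc_cong[OF Pd(2) L])
      fix x assume "x \<in> S"
      then show "\<bar>Dl ds F x\<bar> \<le> s * K (length ds) * W ^ length ds"
        using Pb[of x] L[of x] le ds lm by simp
    qed
  qed
  then show ?thesis unfolding gdm_def smm_def ucm_def bdm_def by auto
qed

lemma gd_ode:
  fixes F :: "real^'n::finite \<Rightarrow> real"
  assumes S: "open S" and W: "1 \<le> W" and c0: "0 \<le> c0" and K: "Kok K1" "Kok K2"
    and Fd: "F differentiable_on S" and Fu: "uniformly_continuous_on S F" and Fb: "\<And>y. y\<in>S \<Longrightarrow> \<bar>F y\<bar> \<le> c0"
    and B1: "\<And>p. gd S W W K1 (B1 p)" and B2: "\<And>p. gd S W W K2 (B2 p)"
    and eq: "\<And>p y. y \<in> S \<Longrightarrow> partial p F y = F y * (F y * B1 p y + B2 p y)"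
  shows "gd S W 1 (odeK c0 K1 K2) F"
proof (rule gd_from_gdm)
  fix m
  let ?KF = "odeK c0 K1 K2"
  have KF: "Kok ?KF" by (rule Kok_odeK[OF c0])
  have W0: "0 \<le> W" using W by simp
  show "gdm S W m 1 ?KF F"
  proof (induction m)
    case 0
    show ?case unfolding gdm_def smm_def ucm_def bdm_def using Fd Fu Fb by auto
  next
    case (Suc m)
    let ?Kx = "\<lambda>i. 2 ^ i * ?KF i * (2 ^ i * ?KF i * K1 i + K2 i)"
    have "gdm S W m W ?Kx (\<lambda>y. F y * (F y * B1 p y + B2 p y))" for p
    proof -
      have a: "gdm S W m (1 * W) (\<lambda>i. 2 ^ i * ?KF i * K1 i) (\<lambda>y. F y * B1 p y)"
        by (rule gdm_mult[OF S W _ _ KF K(1) Suc]) (use W B1 in \<open>auto simp: gd_def\<close>)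
      have b: "gdm S W m W (\<lambda>l. 2 ^ l * ?KF l * K1 l + K2 l) (\<lambda>y. F y * B1 p y + B2 p y)"
        by (rule gdm_add[OF S W0]) (use a B2 in \<open>auto simp: gd_def\<close>)
      have "gdm S W m (1 * W) ?Kx (\<lambda>y. F y * (F y * B1 p y + B2 p y))"
        by (rule gdm_mult[OF S W _ W0 KF Kok_add[OF Kok_mult[OF KF K(1)] K(2)] Suc b]) simp
      then show ?thesis by simp
    qed
    then show ?case
    proof (rule gdm_Suc[OF S Suc])
      show "\<And>p y. y \<in> S \<Longrightarrow> partial p F y = F y * (F y * B1 p y + B2 p y)" by (rule eq)
      have "?Kx m \<le> ?KF (Suc m)" by (simp only: odeK.simps(2) max.cobounded2)
      then have "?Kx m * (W * W ^ m) \<le> ?KF (Suc m) * (W * W ^ m)"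
        using W by (intro mult_right_mono) auto
      then show "W * ?Kx m * W ^ m \<le> 1 * ?KF (Suc m) * W ^ Suc m"
        by (simp only: power_Suc mult_1 ac_simps)
    qed
  qed
qed

lemma uc_lip_comp:
  fixes g :: "'a::metric_space \<Rightarrow> real"
  assumes "uniformly_continuous_on S g" "0 < Lc"
    and lip: "\<And>a b. a \<in> g ` S \<Longrightarrow> b \<in> g ` S \<Longrightarrow> \<bar>\<phi> a - \<phi> b\<bar> \<le> Lc * \<bar>a - b\<bar>"
  shows "uniformly_continuous_on S (\<lambda>y. \<phi> (g y))"
  unfolding uniformly_continuous_on_def
proof (intro allI impI)
  fix e :: real assume e: "e > 0"
  then obtain d where d: "d > 0" "\<forall>x\<in>S. \<forall>x'\<in>S. dist x' x < d \<longrightarrow> dist (g x') (g x) < e / Lc"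
    using assms(1)[unfolded uniformly_continuous_on_def, rule_format, of "e / Lc"] assms(2) by auto
  show "\<exists>d>0. \<forall>x\<in>S. \<forall>x'\<in>S. dist x' x < d \<longrightarrow> dist (\<phi> (g x')) (\<phi> (g x)) < e"
  proof (intro exI[of _ d] conjI ballI impI)
    fix x x' assume xs: "x \<in> S" "x' \<in> S" "dist x' x < d"
    have "\<bar>g x' - g x\<bar> < e / Lc" using d xs by (auto simp: dist_real_def)
    then have "Lc * \<bar>g x' - g x\<bar> < e" using assms(2) by (simp add: field_simps)
    moreover have "\<bar>\<phi> (g x') - \<phi> (g x)\<bar> \<le> Lc * \<bar>g x' - g x\<bar>" using lip xs by auto
    ultimately show "dist (\<phi> (g x')) (\<phi> (g x)) < e" by (simp add: dist_real_def)
  qed (use d in auto)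
qed

lemma gd_mult:
  fixes f g :: "real^'n::finite \<Rightarrow> real"
  assumes "open S" "1 \<le> W" "0 \<le> s1" "0 \<le> s2" "Kok K1" "Kok K2" "gd S W s1 K1 f" "gd S W s2 K2 g"
  shows "gd S W (s1 * s2) (\<lambda>i. 2 ^ i * K1 i * K2 i) (\<lambda>y. f y * g y)"
  using gdm_mult assms unfolding gd_def by blast

lemma gd_add:
  fixes f g :: "real^'n::finite \<Rightarrow> real"
  assumes "open S" "0 \<le> s" "gd S W s K1 f" "gd S W s K2 g"
  shows "gd S W s (\<lambda>l. K1 l + K2 l) (\<lambda>y. f y + g y)"
  using gdm_add assms unfolding gd_def by blast

lemma gd_sum:
  fixes f :: "'i \<Rightarrow> real^'n::finite \<Rightarrow> real"
  assumes "open S" "finite I" "0 \<le> s" "\<And>i. i \<in> I \<Longrightarrow> gd S W s (K i) (f i)"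
  shows "gd S W s (\<lambda>l. \<Sum>i\<in>I. K i l) (\<lambda>y. \<Sum>i\<in>I. f i y)"
  using gdm_sum assms unfolding gd_def by blast

lemma gd_cmult:
  fixes f :: "real^'n::finite \<Rightarrow> real"
  assumes "open S" "gd S W s K f"
  shows "gd S W (\<bar>c\<bar> * s) K (\<lambda>y. c * f y)"
  using gdm_cmult assms unfolding gd_def by blast

lemma gd_weaken:
  assumes "gd S W s K f" "s \<le> s'" "\<And>i. K i \<le> K' i" "0 \<le> s" "\<And>i. 0 \<le> K i" "0 \<le> W"
  shows "gd S W s' K' f"
  using gdm_weaken assms unfolding gd_def by blast

lemma gd_const: "0 \<le> W \<Longrightarrow> gd S W \<bar>c\<bar> (\<lambda>_. 1) (\<lambda>y. c)"
  using gdm_const unfolding gd_def by blast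

lemma gd_zero: "0 \<le> W \<Longrightarrow> 0 \<le> s \<Longrightarrow> gd S W s (\<lambda>_. 1) (\<lambda>y. 0)"
  using gd_weaken[OF gd_const[of W S 0], of s "\<lambda>_. 1"] by auto

lemma gd_cong:
  assumes "open S" "\<And>y. y \<in> S \<Longrightarrow> f y = g y" "gd S W s K f"
  shows "gd S W s K g"
  using gdm_cong assms unfolding gd_def by blast

lemma gd_shift:
  assumes "gd S W s K f"
  shows "gd S W (s * W) (\<lambda>i. K (Suc i)) (partial p f)"
  using gdm_shift assms unfolding gd_def by blast

lemma gd_diff_on: "gd S W s K f \<Longrightarrow> f differentiable_on S"
  unfolding gd_def gdm_def smm_def using Dl.simps(1) by (metis list.size(3) zero_le)

lemma gd_uc: "gd S W s K f \<Longrightarrow> uniformly_continuous_on S f"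
  unfolding gd_def gdm_def ucm_def using Dl.simps(1) by (metis list.size(3) zero_le)

lemma gd_bd0: "gd S W s K f \<Longrightarrow> x \<in> S \<Longrightarrow> \<bar>f x\<bar> \<le> s * K 0"
  unfolding gd_def gdm_def bdm_def using Dl.simps(1) by (metis list.size(3) mult.right_neutral order_refl power_0)

definition Kinv :: "real \<Rightarrow> (nat \<Rightarrow> real) \<Rightarrow> nat \<Rightarrow> real" where
  "Kinv c K = odeK (inverse c) (\<lambda>i. K (Suc i)) (\<lambda>_. 1)"

lemma Kok_Kinv: "0 < c \<Longrightarrow> Kok (Kinv c K)"
  unfolding Kinv_def by (rule Kok_odeK) simp

lemma gd_inv:
  fixes g :: "real^'n::finite \<Rightarrow> real"
  assumes S: "open S" and W: "1 \<le> W" and K: "Kok K" and c: "0 < c"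
    and G: "gd S W 1 K g" and gc: "\<And>y. y \<in> S \<Longrightarrow> c \<le> g y"
  shows "gd S W 1 (Kinv c K) (\<lambda>y. inverse (g y))"
  unfolding Kinv_def
proof (rule gd_ode[OF S W _ Kok_shift[OF K] Kok_const])
  have gd: "g differentiable_on S" by (rule gd_diff_on[OF G])
  have gpos: "\<And>y. y \<in> S \<Longrightarrow> g y \<noteq> 0" using gc c by force
  show "(\<lambda>y. inverse (g y)) differentiable_on S"
    using gd gpos unfolding differentiable_on_def by (auto intro!: differentiable_inverse)
  show "uniformly_continuous_on S (\<lambda>y. inverse (g y))"
  proof (rule uc_lip_comp[OF gd_uc[OF G], of "inverse c ^ 2"])
    fix a b assume ab: "a \<in> g ` S" "b \<in> g ` S"
    then have ac: "c \<le> a" "c \<le> b" using gc by auto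
    then have ap: "0 < a" "0 < b" using c by auto
    have "\<bar>inverse a - inverse b\<bar> = \<bar>a - b\<bar> / (a * b)" using ap by (simp add: field_simps abs_minus_commute)
    also have "\<dots> \<le> \<bar>a - b\<bar> / (c * c)" using ac c by (intro divide_left_mono mult_mono) auto
    also have "\<dots> = inverse c ^ 2 * \<bar>a - b\<bar>" by (simp add: field_simps power2_eq_square)
    finally show "\<bar>inverse a - inverse b\<bar> \<le> inverse c ^ 2 * \<bar>a - b\<bar>" .
  qed (use c in simp)
  show "\<And>y. y \<in> S \<Longrightarrow> \<bar>inverse (g y)\<bar> \<le> inverse c"
  proof -
    fix y assume "y \<in> S"
    then have "c \<le> g y" by (rule gc)
    then show "\<bar>inverse (g y)\<bar> \<le> inverse c" using c by (simp add: le_imp_inverse_le)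
  qed
  show "\<And>p. gd S W W (\<lambda>i. K (Suc i)) (\<lambda>y. - partial p g y)"
    using gd_cmult[OF S gd_shift[OF G], where c="-1"] by simp
  show "\<And>p. gd S W W (\<lambda>_. 1) (\<lambda>y. 0)" using gd_zero[of W W S] W by simp
  show "partial p (\<lambda>y. inverse (g y)) y = inverse (g y) * (inverse (g y) * - partial p g y + 0)" if "y \<in> S" for p y
  proof -
    have "g differentiable (at y)" using gd S that by (simp add: differentiable_on_eq_differentiable_at)
    moreover have "DERIV inverse (g y) :> - (inverse (g y) ^ Suc (Suc 0))" using gpos[OF that] by (rule DERIV_inverse)
    ultimately have "partial p (\<lambda>y. inverse (g y)) y = - (inverse (g y) ^ Suc (Suc 0)) * partial p g y"
      by (rule partial_chain)
    then show ?thesis by (simp add: power2_eq_square)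
  qed
qed (use c in auto)

definition Ksqrt :: "real \<Rightarrow> (nat \<Rightarrow> real) \<Rightarrow> nat \<Rightarrow> real" where
  "Ksqrt c K = odeK (sqrt (K 0)) (\<lambda>_. 1) (\<lambda>i. 2 ^ i * K (Suc i) * Kinv c K i)"

lemma Kok_Ksqrt: "Kok K \<Longrightarrow> Kok (Ksqrt c K)"
  unfolding Ksqrt_def by (rule Kok_odeK) (simp add: Kok_nonneg)

lemma gd_sqrt:
  fixes g :: "real^'n::finite \<Rightarrow> real"
  assumes S: "open S" and W: "1 \<le> W" and K: "Kok K" and c: "0 < c"
    and G: "gd S W 1 K g" and gc: "\<And>y. y \<in> S \<Longrightarrow> c \<le> g y"
  shows "gd S W 1 (Ksqrt c K) (\<lambda>y. sqrt (g y))"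
  unfolding Ksqrt_def
proof (rule gd_ode[OF S W _ Kok_const Kok_mult[OF Kok_shift[OF K] Kok_Kinv[OF c]]])
  have gd: "g differentiable_on S" by (rule gd_diff_on[OF G])
  have gpos: "\<And>y. y \<in> S \<Longrightarrow> 0 < g y" using gc c by force
  have gda: "\<And>y. y \<in> S \<Longrightarrow> g differentiable (at y)" using gd S by (simp add: differentiable_on_eq_differentiable_at)
  show "(\<lambda>y. sqrt (g y)) differentiable_on S"
    unfolding differentiable_on_eq_differentiable_at[OF S]
  proof
    fix y assume y: "y \<in> S"
    have "sqrt differentiable (at (g y))"
      using DERIV_real_sqrt[OF gpos[OF y]] unfolding differentiable_def
      by (auto dest: has_field_derivative_imp_has_derivative)
    then show "(\<lambda>y. sqrt (g y)) differentiable (at y)"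
      using differentiable_compose[OF _ gda[OF y]] by blast
  qed
  show "uniformly_continuous_on S (\<lambda>y. sqrt (g y))"
  proof (rule uc_lip_comp[OF gd_uc[OF G], of "inverse (sqrt c)"])
    fix a b assume ab: "a \<in> g ` S" "b \<in> g ` S"
    then have ac: "c \<le> a" "c \<le> b" using gc by auto
    have a0: "0 \<le> a" "0 \<le> b" using ac c by auto
    have sc: "sqrt c \<le> sqrt a + sqrt b" using real_sqrt_le_mono[OF ac(1)] real_sqrt_ge_zero[OF a0(2)] by linarith
    have sp: "0 < sqrt c" using c by simp
    have E: "(sqrt a - sqrt b) * (sqrt a + sqrt b) = a - b" using a0
      by (simp add: algebra_simps)
    have "\<bar>a - b\<bar> = \<bar>sqrt a - sqrt b\<bar> * \<bar>sqrt a + sqrt b\<bar>" unfolding E[symmetric] abs_mult ..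
    also have "\<bar>sqrt a + sqrt b\<bar> = sqrt a + sqrt b" using a0 by simp
    finally have "\<bar>sqrt a - sqrt b\<bar> * sqrt c \<le> \<bar>a - b\<bar>"
      using mult_left_mono[OF sc abs_ge_zero[of "sqrt a - sqrt b"]] by simp
    then show "\<bar>sqrt a - sqrt b\<bar> \<le> inverse (sqrt c) * \<bar>a - b\<bar>"
      using sp by (simp add: field_simps)
  qed (use c in simp)
  show "\<And>y. y \<in> S \<Longrightarrow> \<bar>sqrt (g y)\<bar> \<le> sqrt (K 0)"
  proof -
    fix y assume y: "y \<in> S"
    have "\<bar>g y\<bar> \<le> 1 * K 0" by (rule gd_bd0[OF G y])
    then show "\<bar>sqrt (g y)\<bar> \<le> sqrt (K 0)" using gpos[OF y] by simp
  qed
  show "0 \<le> sqrt (K 0)" using K by (simp add: Kok_nonneg)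
  show "\<And>p. gd S W W (\<lambda>_. 1) (\<lambda>y. 0)" using gd_zero[of W W S] W by simp
  show "\<And>p. gd S W W (\<lambda>i. 2 ^ i * K (Suc i) * Kinv c K i) (\<lambda>y. 1/2 * (partial p g y * inverse (g y)))"
  proof -
    fix p
    have a: "gd S W ((1 * W) * 1) (\<lambda>i. 2 ^ i * K (Suc i) * Kinv c K i) (\<lambda>y. partial p g y * inverse (g y))"
      by (rule gd_mult[OF S W _ _ Kok_shift[OF K] Kok_Kinv[OF c] gd_shift[OF G] gd_inv[OF S W K c G gc]]) (use W in auto)
    have b: "gd S W (\<bar>1/2\<bar> * ((1 * W) * 1)) (\<lambda>i. 2 ^ i * K (Suc i) * Kinv c K i) (\<lambda>y. 1/2 * (partial p g y * inverse (g y)))"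
      by (rule gd_cmult[OF S a])
    show "gd S W W (\<lambda>i. 2 ^ i * K (Suc i) * Kinv c K i) (\<lambda>y. 1/2 * (partial p g y * inverse (g y)))"
      by (rule gd_weaken[OF b]) (use W Kok_nonneg[OF Kok_mult[OF Kok_shift[OF K] Kok_Kinv[OF c]]] in auto)
  qed
  show "partial p (\<lambda>y. sqrt (g y)) y = sqrt (g y) * (sqrt (g y) * 0 + 1/2 * (partial p g y * inverse (g y)))"
    if "y \<in> S" for p y
  proof -
    have D: "partial p (\<lambda>y. sqrt (g y)) y = inverse (sqrt (g y)) / 2 * partial p g y"
      by (rule partial_chain[OF gda[OF that] DERIV_real_sqrt[OF gpos[OF that]]])
    have e: "inverse (g y) = inverse (sqrt (g y)) * inverse (sqrt (g y))"
      using gpos[OF that] by (simp add: inverse_mult_distrib[symmetric])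
    have sp: "sqrt (g y) > 0" using gpos[OF that] by simp
    show ?thesis unfolding D e using sp by (simp add: field_simps)
  qed
qed (use c in auto)

lemma clairaut_aux:
  fixes f :: "real^'n::finite \<Rightarrow> real"
  assumes S: "open S" and r: "0 < r" "ball x r \<subseteq> S" and fd: "f differentiable_on S"
    and Dp: "(partial p f has_derivative Dp) (at x)" and e: "0 < e"
  shows "\<exists>d>0. \<forall>t. 0 < t \<and> t < d \<longrightarrow>
     \<bar>(f (x + t *\<^sub>R axis q 1 + t *\<^sub>R axis p 1) - f (x + t *\<^sub>R axis p 1) - f (x + t *\<^sub>R axis q 1) + f x)
        - t\<^sup>2 * Dp (axis q 1)\<bar> \<le> 3 * e * t\<^sup>2"
proof -
  let ?u = "axis p (1::real) :: real^'n" and ?v = "axis q (1::real) :: real^'n"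
  let ?g = "partial p f"
  have fda: "\<And>y. y \<in> S \<Longrightarrow> f differentiable (at y)" using fd S by (simp add: differentiable_on_eq_differentiable_at)
  have lin: "linear Dp" using Dp has_derivative_linear by blast
  obtain d0 where d0: "d0 > 0" "\<forall>y. norm (y - x) < d0 \<longrightarrow> \<bar>?g y - ?g x - Dp (y - x)\<bar> \<le> e * norm (y - x)"
    using Dp[unfolded has_derivative_within_alt] e by (auto simp: real_norm_def)
  define d where "d = min (d0 / 2) (r / 2)"
  have d: "d > 0" using d0 r unfolding d_def by simp
  have nb: "norm (s *\<^sub>R ?u + t *\<^sub>R ?v) \<le> \<bar>s\<bar> + \<bar>t\<bar>" for s t
    using norm_triangle_ineq[of "s *\<^sub>R ?u" "t *\<^sub>R ?v"] by simp
  show ?thesis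
  proof (intro exI[of _ d] conjI allI impI)
    show "d > 0" by (rule d)
    fix t :: real assume t: "0 < t \<and> t < d"
    have inS: "x + s *\<^sub>R ?u + t' *\<^sub>R ?v \<in> S" if "\<bar>s\<bar> \<le> t" "\<bar>t'\<bar> \<le> t" for s t'
    proof -
      have "norm (s *\<^sub>R ?u + t' *\<^sub>R ?v) < r" using nb[of s t'] that t unfolding d_def by linarith
      then have "x + (s *\<^sub>R ?u + t' *\<^sub>R ?v) \<in> ball x r" by (simp add: dist_norm norm_minus_commute add.commute)
      then show ?thesis using r(2) by (auto simp: add.assoc)
    qed
    define \<phi> where "\<phi> s = f ((x + t *\<^sub>R ?v) + s *\<^sub>R ?u) - f (x + s *\<^sub>R ?u)" for s
    have D\<phi>: "(\<phi> has_real_derivative (?g (x + s *\<^sub>R ?u + t *\<^sub>R ?v) - ?g (x + s *\<^sub>R ?u))) (at s)"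
      if "\<bar>s\<bar> \<le> t" for s
    proof -
      have i1: "x + s *\<^sub>R ?u + t *\<^sub>R ?v \<in> S" using inS[of s t] that t by auto
      have i2: "x + s *\<^sub>R ?u \<in> S" using inS[of s 0] that t by auto
      obtain f1 where f1: "(f has_derivative f1) (at (x + s *\<^sub>R ?u + t *\<^sub>R ?v))" using fda[OF i1] differentiable_def by blast
      obtain f2 where f2: "(f has_derivative f2) (at (x + s *\<^sub>R ?u))" using fda[OF i2] differentiable_def by blast
      have a: "((\<lambda>s. f ((x + t *\<^sub>R ?v) + s *\<^sub>R ?u)) has_real_derivative f1 ?u) (at s)"
        by (rule partial_has_real[OF f1]) (simp add: algebra_simps)
      have b: "((\<lambda>s. f (x + s *\<^sub>R ?u)) has_real_derivative f2 ?u) (at s)"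
        by (rule partial_has_real[OF f2]) simp
      show ?thesis using DERIV_diff[OF a b] partial_eq[OF f1, of p] partial_eq[OF f2, of p]
        unfolding \<phi>_def by simp
    qed
    obtain l z where z: "0 < z" "z < t" "DERIV \<phi> z :> l" "\<phi> t - \<phi> 0 = (t - 0) * l"
    proof -
      have "continuous_on {0..t} \<phi>"
        by (rule DERIV_continuous_on[where D="\<lambda>s. ?g (x + s *\<^sub>R ?u + t *\<^sub>R ?v) - ?g (x + s *\<^sub>R ?u)"])
           (use D\<phi> t in \<open>auto intro: has_field_derivative_at_within\<close>)
      moreover have "\<phi> differentiable (at s)" if "0 < s" "s < t" for s
        using D\<phi>[of s] that unfolding real_differentiable_def by auto
      ultimately show ?thesis using MVT[of 0 t \<phi>] t that by blast
    qed
    have l: "l = ?g (x + z *\<^sub>R ?u + t *\<^sub>R ?v) - ?g (x + z *\<^sub>R ?u)"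
      using DERIV_unique[OF z(3) D\<phi>[of z]] z t by auto
    have Delta: "f (x + t *\<^sub>R ?v + t *\<^sub>R ?u) - f (x + t *\<^sub>R ?u) - f (x + t *\<^sub>R ?v) + f x = t * l"
      using z(4) unfolding \<phi>_def by (simp add: algebra_simps)
    have e1: "\<bar>?g (x + z *\<^sub>R ?u + t *\<^sub>R ?v) - ?g x - Dp (z *\<^sub>R ?u + t *\<^sub>R ?v)\<bar> \<le> e * norm (z *\<^sub>R ?u + t *\<^sub>R ?v)"
      using d0(2)[rule_format, of "x + z *\<^sub>R ?u + t *\<^sub>R ?v"] nb[of z t] z t unfolding d_def
      by (auto simp: algebra_simps)
    have e2: "\<bar>?g (x + z *\<^sub>R ?u) - ?g x - Dp (z *\<^sub>R ?u)\<bar> \<le> e * norm (z *\<^sub>R ?u)"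
      using d0(2)[rule_format, of "x + z *\<^sub>R ?u"] z t unfolding d_def by auto
    have n1: "e * norm (z *\<^sub>R ?u + t *\<^sub>R ?v) \<le> e * (2 * t)" using nb[of z t] z t e by (intro mult_left_mono) auto
    have n2: "e * norm (z *\<^sub>R ?u) \<le> e * t" using z e by (intro mult_left_mono) auto
    have Dl: "Dp (z *\<^sub>R ?u + t *\<^sub>R ?v) = z * Dp ?u + t * Dp ?v" "Dp (z *\<^sub>R ?u) = z * Dp ?u"
      using lin by (simp_all add: linear_add linear_cmul)
    have "\<bar>l - t * Dp ?v\<bar> \<le> 3 * e * t"
      using e1 e2 n1 n2 unfolding l Dl by (simp add: abs_le_iff)
    then have "\<bar>t * l - t\<^sup>2 * Dp ?v\<bar> \<le> t * (3 * e * t)"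
    proof -
      have "t * l - t\<^sup>2 * Dp ?v = t * (l - t * Dp ?v)" by (simp add: power2_eq_square algebra_simps)
      then have "\<bar>t * l - t\<^sup>2 * Dp ?v\<bar> = t * \<bar>l - t * Dp ?v\<bar>" using t by (simp add: abs_mult)
      then show ?thesis using mult_left_mono[OF \<open>\<bar>l - t * Dp ?v\<bar> \<le> 3 * e * t\<close>, of t] t by simp
    qed
    then show "\<bar>(f (x + t *\<^sub>R ?v + t *\<^sub>R ?u) - f (x + t *\<^sub>R ?u) - f (x + t *\<^sub>R ?v) + f x) - t\<^sup>2 * Dp ?v\<bar> \<le> 3 * e * t\<^sup>2"
      unfolding Delta by (simp add: power2_eq_square algebra_simps)
  qed
qed

lemma clairaut:
  fixes f :: "real^'n::finite \<Rightarrow> real"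
  assumes S: "open S" and x: "x \<in> S" and fd: "f differentiable_on S"
    and gp: "partial p f differentiable_on S" and gq: "partial q f differentiable_on S"
  shows "partial q (partial p f) x = partial p (partial q f) x"
proof -
  obtain r where r: "0 < r" "ball x r \<subseteq> S" using S x open_contains_ball by blast
  obtain Dp where Dp: "(partial p f has_derivative Dp) (at x)"
    using gp S x by (auto simp: differentiable_on_eq_differentiable_at differentiable_def)
  obtain Dq where Dq: "(partial q f has_derivative Dq) (at x)"
    using gq S x by (auto simp: differentiable_on_eq_differentiable_at differentiable_def)
  let ?a = "Dp (axis q 1) - Dq (axis p 1)"
  have bound: "\<bar>?a\<bar> \<le> 6 * e" if e: "e > 0" for e
  proof -
    obtain d1 where d1: "d1 > 0" "\<forall>t. 0 < t \<and> t < d1 \<longrightarrow>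
     \<bar>(f (x + t *\<^sub>R axis q 1 + t *\<^sub>R axis p 1) - f (x + t *\<^sub>R axis p 1) - f (x + t *\<^sub>R axis q 1) + f x)
        - t\<^sup>2 * Dp (axis q 1)\<bar> \<le> 3 * e * t\<^sup>2"
      using clairaut_aux[OF S r fd Dp e, of q] by blast
    obtain d2 where d2: "d2 > 0" "\<forall>t. 0 < t \<and> t < d2 \<longrightarrow>
     \<bar>(f (x + t *\<^sub>R axis p 1 + t *\<^sub>R axis q 1) - f (x + t *\<^sub>R axis q 1) - f (x + t *\<^sub>R axis p 1) + f x)
        - t\<^sup>2 * Dq (axis p 1)\<bar> \<le> 3 * e * t\<^sup>2"
      using clairaut_aux[OF S r fd Dq e, of p] by blast
    define t where "t = min d1 d2 / 2"
    have t: "0 < t" "t < d1" "t < d2" using d1 d2 unfolding t_def by auto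
    have c: "x + t *\<^sub>R axis p 1 + t *\<^sub>R axis q 1 = x + t *\<^sub>R axis q 1 + t *\<^sub>R axis p 1"
      by (simp add: algebra_simps)
    define \<Delta> where "\<Delta> = f (x + t *\<^sub>R axis q 1 + t *\<^sub>R axis p 1) - f (x + t *\<^sub>R axis p 1) - f (x + t *\<^sub>R axis q 1) + f x"
    have A: "\<bar>\<Delta> - t\<^sup>2 * Dp (axis q 1)\<bar> \<le> 3 * e * t\<^sup>2" using d1(2) t unfolding \<Delta>_def by blast
    have B: "\<bar>\<Delta> - t\<^sup>2 * Dq (axis p 1)\<bar> \<le> 3 * e * t\<^sup>2" using d2(2) t unfolding \<Delta>_def c by (simp add: algebra_simps)
    have "\<bar>t\<^sup>2 * ?a\<bar> \<le> 6 * e * t\<^sup>2" using A B by (simp add: abs_le_iff algebra_simps)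
    moreover have "\<bar>t\<^sup>2 * ?a\<bar> = t\<^sup>2 * \<bar>?a\<bar>" by (simp add: abs_mult)
    ultimately have "t\<^sup>2 * \<bar>?a\<bar> \<le> t\<^sup>2 * (6 * e)" by (simp add: algebra_simps)
    then show ?thesis using t by simp
  qed
  have "?a = 0"
  proof (rule ccontr)
    assume "?a \<noteq> 0"
    then have "\<bar>?a\<bar> \<le> 6 * (\<bar>?a\<bar> / 12)" using bound[of "\<bar>?a\<bar> / 12"] by simp
    then show False using \<open>?a \<noteq> 0\<close> by simp
  qed
  then show ?thesis using partial_eq[OF Dp, of q] partial_eq[OF Dq, of p] by simp
qed

definition sm :: "(real^'n::finite) set \<Rightarrow> (real^'n \<Rightarrow> real) \<Rightarrow> bool" where
  "sm S f \<longleftrightarrow> (\<forall>ds. Dl ds f differentiable_on S)"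

lemma Dl_swap:
  fixes f :: "real^'n::finite \<Rightarrow> real"
  assumes S: "open S" and x: "x \<in> S" and f: "sm S f"
  shows "Dl (a @ p # q # b) f x = Dl (a @ q # p # b) f x"
proof -
  let ?g = "Dl b f"
  have e: "Dl [p, q] ?g y = Dl [q, p] ?g y" if "y \<in> S" for y
  proof -
    have "partial p (partial q ?g) y = partial q (partial p ?g) y"
    proof (rule clairaut[OF S that, symmetric])
      show "Dl b f differentiable_on S" using f unfolding sm_def by blast
      show "partial p (Dl b f) differentiable_on S" using f unfolding sm_def by (metis Dl.simps(2))
      show "partial q (Dl b f) differentiable_on S" using f unfolding sm_def by (metis Dl.simps(2))
    qed
    then show ?thesis by simp
  qed
  have "Dl (a @ p # q # b) f x = Dl a (Dl [p, q] ?g) x" using Dl_append[of a "[p,q] @ b" f] Dl_append[of "[p,q]" b f] by simp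
  also have "\<dots> = Dl a (Dl [q, p] ?g) x" by (rule Dl_local[OF S x e])
  also have "\<dots> = Dl (a @ q # p # b) f x" using Dl_append[of a "[q,p] @ b" f] Dl_append[of "[q,p]" b f] by simp
  finally show ?thesis .
qed

lemma Dl_front:
  fixes f :: "real^'n::finite \<Rightarrow> real"
  assumes S: "open S" and f: "sm S f"
  shows "x \<in> S \<Longrightarrow> Dl (u @ p # v) f x = Dl (p # u @ v) f x"
proof (induction u arbitrary: x)
  case Nil then show ?case by simp
next
  case (Cons w u)
  have "Dl ((w # u) @ p # v) f x = partial w (Dl (u @ p # v) f) x" by simp
  also have "\<dots> = partial w (Dl (p # u @ v) f) x" by (rule partial_local[OF S Cons.prems Cons.IH])
  also have "\<dots> = Dl ([] @ w # p # (u @ v)) f x" by simp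
  also have "\<dots> = Dl ([] @ p # w # (u @ v)) f x" by (rule Dl_swap[OF S Cons.prems f])
  finally show ?case by simp
qed

lemma Dl_perm:
  fixes f :: "real^'n::finite \<Rightarrow> real"
  assumes S: "open S" and f: "sm S f"
  shows "mset ds1 = mset ds2 \<Longrightarrow> x \<in> S \<Longrightarrow> Dl ds1 f x = Dl ds2 f x"
proof (induction ds1 arbitrary: ds2 x)
  case Nil then show ?case by simp
next
  case (Cons p r)
  have "p \<in> set ds2" using Cons.prems(1) by (metis list.set_intros(1) set_mset_mset)
  then obtain u v where ds2: "ds2 = u @ p # v" by (meson split_list)
  have m: "mset r = mset (u @ v)" using Cons.prems(1) ds2 by simp
  have "Dl (p # r) f x = partial p (Dl r f) x" by simp
  also have "\<dots> = partial p (Dl (u @ v) f) x" by (rule partial_local[OF S Cons.prems(2)]) (use Cons.IH m in blast)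
  also have "\<dots> = Dl ds2 f x" using Dl_front[OF S f Cons.prems(2), of u p v] ds2 by simp
  finally show ?case .
qed

lemma coords_props: "distinct (coords :: 'n::finite list) \<and> set (coords :: 'n list) = UNIV"
proof -
  have "\<exists>xs. distinct xs \<and> set xs = (UNIV :: 'n set)" using finite_distinct_list[of "UNIV :: 'n set"] by auto
  then show ?thesis unfolding coords_def by (rule someI_ex)
qed

lemma coords_distinct: "distinct (coords :: 'n::finite list)" using coords_props by blast
lemma coords_set: "set (coords :: 'n::finite list) = UNIV" using coords_props by blast

lemma count_concat: "count (mset (concat xss)) q = sum_list (map (\<lambda>xs. count (mset xs) q) xss)"
  by (induction xss) auto

definition canon :: "('n::finite \<Rightarrow> nat) \<Rightarrow> 'n list" where
  "canon \<beta> = concat (map (\<lambda>p. replicate (\<beta> p) p) coords)"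

lemma Dm_canon: "Dm \<beta> f = Dl (canon \<beta>) f"
  unfolding Dm_def canon_def ..

lemma length_canon: "length (canon (\<beta> :: 'n::finite \<Rightarrow> nat)) = sum \<beta> UNIV"
proof -
  have "length (canon \<beta>) = sum_list (map \<beta> (coords :: 'n list))"
    unfolding canon_def by (simp add: length_concat o_def)
  also have "\<dots> = sum \<beta> (set coords)" by (rule sum_list_distinct_conv_sum_set[OF coords_distinct])
  finally show ?thesis by (simp add: coords_set)
qed

lemma count_canon: "count (mset (canon (\<beta> :: 'n::finite \<Rightarrow> nat))) q = \<beta> q"
proof -
  have "count (mset (canon \<beta>)) q = sum_list (map (\<lambda>p. count (mset (replicate (\<beta> p) p)) q) (coords :: 'n list))"
    unfolding canon_def count_concat by (simp add: o_def)
  also have "\<dots> = sum (\<lambda>p. count (mset (replicate (\<beta> p) p)) q) (set coords)"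
    by (rule sum_list_distinct_conv_sum_set[OF coords_distinct])
  also have "\<dots> = (\<Sum>p\<in>UNIV. if p = q then \<beta> p else 0)" unfolding coords_set
    by (intro sum.cong) auto
  finally show ?thesis by simp
qed

lemma mset_canon: "mset (canon (\<lambda>p. count (mset (ds :: 'n::finite list)) p)) = mset ds"
  by (rule multiset_eqI) (simp add: count_canon)

lemma sum_count_len: "sum (\<lambda>p. count (mset (ds :: 'n::finite list)) p) UNIV = length ds"
  using sum_count_set[of ds UNIV] by (simp add: count_mset)

lemma finite_MI: "finite (MI k :: ('n::finite \<Rightarrow> nat) set)"
proof -
  have "(MI k :: ('n \<Rightarrow> nat) set) \<subseteq> PiE UNIV (\<lambda>_. {..k})"
  proof
    fix \<beta> :: "'n \<Rightarrow> nat" assume "\<beta> \<in> MI k"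
    then have "\<beta> p \<le> k" for p unfolding MI_def
      using member_le_sum[of p UNIV \<beta>] by auto
    then show "\<beta> \<in> PiE UNIV (\<lambda>_. {..k})" by (auto simp: PiE_def extensional_def)
  qed
  moreover have "finite (PiE (UNIV :: 'n set) (\<lambda>_. {..k}))" by (intro finite_PiE) auto
  ultimately show ?thesis by (rule finite_subset)
qed

lemma MI_count: "(\<lambda>p. count (mset (ds :: 'n::finite list)) p) \<in> MI (length ds)"
  unfolding MI_def using sum_count_len by auto

lemma Dl_Dm:
  fixes f :: "real^'n::finite \<Rightarrow> real"
  assumes "open S" "sm S f" "x \<in> S"
  shows "Dl ds f x = Dm (\<lambda>p. count (mset ds) p) f x"
  unfolding Dm_canon by (rule Dl_perm[OF assms(1,2) _ assms(3)]) (simp add: mset_canon)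

lemma uc_bound:
  fixes f :: "real^'n::finite \<Rightarrow> real"
  assumes "uniformly_continuous_on S f" "bounded S"
  shows "\<exists>B. \<forall>x\<in>S. \<bar>f x\<bar> \<le> B"
  using bounded_uniformly_continuous_image[OF assms] unfolding bounded_iff by auto

lemma sqrt_sum_sq_le_abs: "sqrt (\<Sum>j\<in>J. (a j)\<^sup>2) \<le> (\<Sum>j\<in>J. \<bar>a j\<bar>)"
  using L2_set_le_sum_abs[of a J] unfolding L2_set_def .

lemma semi_facts:
  fixes F :: "'j \<Rightarrow> real^'n::finite \<Rightarrow> real"
  assumes bd: "bounded \<Omega>" and ne: "\<Omega> \<noteq> {}" and J: "finite J"
    and UC: "\<And>\<beta> j. \<beta> \<in> MI k \<Longrightarrow> j \<in> J \<Longrightarrow> uniformly_continuous_on \<Omega> (Dm \<beta> (F j))"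
  shows "0 \<le> semi \<Omega> J F k"
    and "\<And>\<beta> x. \<beta> \<in> MI k \<Longrightarrow> x \<in> \<Omega> \<Longrightarrow> sqrt (\<Sum>j\<in>J. (Dm \<beta> (F j) x)\<^sup>2) \<le> semi \<Omega> J F k"
proof -
  define g where "g \<beta> y = sqrt (\<Sum>j\<in>J. (Dm \<beta> (F j) y)\<^sup>2)" for \<beta> y
  have bdd: "bdd_above (g \<beta> ` \<Omega>)" if "\<beta> \<in> MI k" for \<beta>
  proof -
    have "\<forall>j\<in>J. \<exists>B. \<forall>x\<in>\<Omega>. \<bar>Dm \<beta> (F j) x\<bar> \<le> B" using uc_bound[OF UC[OF that] bd] by blast
    then obtain B where B: "\<And>j x. j \<in> J \<Longrightarrow> x \<in> \<Omega> \<Longrightarrow> \<bar>Dm \<beta> (F j) x\<bar> \<le> B j" by metis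
    have "g \<beta> x \<le> (\<Sum>j\<in>J. B j)" if "x \<in> \<Omega>" for x
      unfolding g_def using sqrt_sum_sq_le_abs[of "\<lambda>j. Dm \<beta> (F j) x" J] sum_mono[of J "\<lambda>j. \<bar>Dm \<beta> (F j) x\<bar>" B] B that
      by fastforce
    then show ?thesis by (intro bdd_aboveI[where M="\<Sum>j\<in>J. B j"]) auto
  qed
  obtain y where y: "y \<in> \<Omega>" using ne by blast
  have sup0: "0 \<le> (SUP x\<in>\<Omega>. g \<beta> x)" if "\<beta> \<in> MI k" for \<beta>
  proof -
    have "0 \<le> g \<beta> y" unfolding g_def by (simp add: sum_nonneg)
    also have "\<dots> \<le> (SUP x\<in>\<Omega>. g \<beta> x)" by (rule cSUP_upper[OF y bdd[OF that]])
    finally show ?thesis .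
  qed
  have semi: "semi \<Omega> J F k = (\<Sum>\<beta>\<in>(MI k :: ('n \<Rightarrow> nat) set). (SUP x\<in>\<Omega>. g \<beta> x))" unfolding semi_def g_def ..
  show "0 \<le> semi \<Omega> J F k" unfolding semi using sup0 by (simp add: sum_nonneg)
  fix \<beta> :: "'n \<Rightarrow> nat" and x assume b: "\<beta> \<in> MI k" and x: "x \<in> \<Omega>"
  have "g \<beta> x \<le> (SUP x\<in>\<Omega>. g \<beta> x)" by (rule cSUP_upper[OF x bdd[OF b]])
  also have "\<dots> \<le> (\<Sum>\<beta>\<in>(MI k :: ('n \<Rightarrow> nat) set). (SUP x\<in>\<Omega>. g \<beta> x))"
    by (rule member_le_sum[OF b]) (use sup0 finite_MI in auto)
  finally show "sqrt (\<Sum>j\<in>J. (Dm \<beta> (F j) x)\<^sup>2) \<le> semi \<Omega> J F k" unfolding semi g_def .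
qed

lemma cnorm_point:
  fixes F :: "'j \<Rightarrow> real^'n::finite \<Rightarrow> real"
  assumes bd: "bounded \<Omega>" and ne: "\<Omega> \<noteq> {}" and J: "finite J"
    and UC: "\<And>\<beta> j i. i \<le> k' \<Longrightarrow> \<beta> \<in> MI i \<Longrightarrow> j \<in> J \<Longrightarrow> uniformly_continuous_on \<Omega> (Dm \<beta> (F j))"
    and k: "k \<le> k'" and b: "\<beta> \<in> MI k" and x: "x \<in> \<Omega>"
  shows "sqrt (\<Sum>j\<in>J. (Dm \<beta> (F j) x)\<^sup>2) \<le> cnorm \<Omega> J F k'"
proof -
  have "sqrt (\<Sum>j\<in>J. (Dm \<beta> (F j) x)\<^sup>2) \<le> semi \<Omega> J F k"
    by (rule semi_facts(2)[OF bd ne J _ b x]) (use UC k in auto)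
  also have "\<dots> \<le> (\<Sum>i\<le>k'. semi \<Omega> J F i)"
    by (rule member_le_sum) (use k semi_facts(1)[OF bd ne J] UC in auto)
  finally show ?thesis unfolding cnorm_def .
qed

lemma cnorm_bound:
  fixes F :: "'j \<Rightarrow> real^'n::finite \<Rightarrow> real"
  assumes ne: "\<Omega> \<noteq> {}" and J: "finite J" and s: "0 \<le> s" and W: "1 \<le> W" and K: "Kok K"
    and G: "\<And>j. j \<in> J \<Longrightarrow> gd \<Omega> W s K (F j)"
  shows "cnorm \<Omega> J F k \<le> s * W ^ k * (\<Sum>i\<le>k. real (card (MI i :: ('n \<Rightarrow> nat) set)) * sqrt (real (card J)) * K i)"
proof -
  have semi_le: "semi \<Omega> J F i \<le> real (card (MI i :: ('n \<Rightarrow> nat) set)) * (sqrt (real (card J)) * (s * K i * W ^ i))" for i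
  proof -
    let ?B = "s * K i * W ^ i"
    have B0: "0 \<le> ?B" using s K W by (simp add: Kok_nonneg)
    have each: "(SUP x\<in>\<Omega>. sqrt (\<Sum>j\<in>J. (Dm \<beta> (F j) x)\<^sup>2)) \<le> sqrt (real (card J)) * ?B"
      if b: "\<beta> \<in> MI i" for \<beta>
    proof (rule cSUP_least[OF ne])
      fix x assume x: "x \<in> \<Omega>"
      have l: "length (canon \<beta>) = i" using b length_canon unfolding MI_def by auto
      have aj: "\<bar>Dm \<beta> (F j) x\<bar> \<le> ?B" if "j \<in> J" for j
        using G[OF that] x l unfolding gd_def gdm_def bdm_def Dm_canon by (metis order_refl)
      have "(\<Sum>j\<in>J. (Dm \<beta> (F j) x)\<^sup>2) \<le> (\<Sum>j\<in>J. ?B\<^sup>2)"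
        by (rule sum_mono) (use aj B0 in \<open>simp add: abs_le_square_iff[symmetric]\<close>)
      also have "\<dots> = real (card J) * ?B\<^sup>2" by simp
      finally have "sqrt (\<Sum>j\<in>J. (Dm \<beta> (F j) x)\<^sup>2) \<le> sqrt (real (card J) * ?B\<^sup>2)" by (rule real_sqrt_le_mono)
      also have "\<dots> = sqrt (real (card J)) * ?B" using B0 by (simp add: real_sqrt_mult)
      finally show "sqrt (\<Sum>j\<in>J. (Dm \<beta> (F j) x)\<^sup>2) \<le> sqrt (real (card J)) * ?B" .
    qed
    have "semi \<Omega> J F i \<le> (\<Sum>\<beta>\<in>(MI i :: ('n \<Rightarrow> nat) set). sqrt (real (card J)) * ?B)"
      unfolding semi_def by (rule sum_mono) (rule each)
    then show ?thesis by simp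
  qed
  have "cnorm \<Omega> J F k \<le> (\<Sum>i\<le>k. real (card (MI i :: ('n \<Rightarrow> nat) set)) * (sqrt (real (card J)) * (s * K i * W ^ i)))"
    unfolding cnorm_def by (rule sum_mono) (rule semi_le)
  also have "\<dots> \<le> (\<Sum>i\<le>k. s * W ^ k * (real (card (MI i :: ('n \<Rightarrow> nat) set)) * sqrt (real (card J)) * K i))"
  proof (rule sum_mono)
    fix i assume "i \<in> {..k}"
    then have "W ^ i \<le> W ^ k" using W by (simp add: power_increasing)
    moreover have "0 \<le> real (card (MI i :: ('n \<Rightarrow> nat) set)) * sqrt (real (card J)) * (s * K i)"
      using s K by (simp add: Kok_nonneg)
    ultimately have "real (card (MI i :: ('n \<Rightarrow> nat) set)) * sqrt (real (card J)) * (s * K i) * W ^ i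
        \<le> real (card (MI i :: ('n \<Rightarrow> nat) set)) * sqrt (real (card J)) * (s * K i) * W ^ k"
      by (rule mult_left_mono)
    then show "real (card (MI i :: ('n \<Rightarrow> nat) set)) * (sqrt (real (card J)) * (s * K i * W ^ i))
        \<le> s * W ^ k * (real (card (MI i :: ('n \<Rightarrow> nat) set)) * sqrt (real (card J)) * K i)"
      by (simp add: algebra_simps)
  qed
  also have "\<dots> = s * W ^ k * (\<Sum>i\<le>k. real (card (MI i :: ('n \<Rightarrow> nat) set)) * sqrt (real (card J)) * K i)"
    by (simp add: sum_distrib_left)
  finally show ?thesis .
qed

lemma ents_apply: "ents h PQ x = h x $ fst PQ $ snd PQ"
  by (cases PQ) (simp add: ents_def)

lemma pair_sum: "(\<Sum>PQ\<in>UNIV. f (fst PQ) (snd PQ)) = (\<Sum>p\<in>UNIV. \<Sum>q\<in>UNIV. (f p q :: real))"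
  by (simp add: sum.cartesian_product case_prod_beta flip: UNIV_Times_UNIV)

definition mb :: "'n::finite \<times> 'n \<Rightarrow> real^'n^'n" where
  "mb PQ = (\<chi> i j. if i = fst PQ \<and> j = snd PQ then 1 else 0)"

lemma mat_expand: "(M :: real^'n::finite^'n) = (\<Sum>PQ\<in>UNIV. (M $ fst PQ $ snd PQ) *\<^sub>R mb PQ)"
proof -
  have "(\<Sum>PQ\<in>UNIV. (M $ fst PQ $ snd PQ) *\<^sub>R mb PQ) $ i $ j = M $ i $ j" for i j
  proof -
    have "(\<Sum>PQ\<in>UNIV. (M $ fst PQ $ snd PQ) *\<^sub>R mb PQ) $ i $ j
        = (\<Sum>PQ\<in>UNIV. (M $ fst PQ $ snd PQ) * (if i = fst PQ \<and> j = snd PQ then 1 else 0))"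
      by (simp add: mb_def)
    also have "\<dots> = (\<Sum>PQ\<in>{(i,j)}. (M $ fst PQ $ snd PQ) * (if i = fst PQ \<and> j = snd PQ then 1 else 0))"
      by (rule sum.mono_neutral_right) auto
    finally show ?thesis by simp
  qed
  then show ?thesis by (simp add: vec_eq_iff)
qed

lemma linear_expand:
  assumes "linear (L :: real^'n::finite^'n \<Rightarrow> real)"
  shows "L M = (\<Sum>PQ\<in>UNIV. M $ fst PQ $ snd PQ * L (mb PQ))"
proof -
  have "L M = L (\<Sum>PQ\<in>UNIV. (M $ fst PQ $ snd PQ) *\<^sub>R mb PQ)" by (subst mat_expand) simp
  also have "\<dots> = (\<Sum>PQ\<in>UNIV. M $ fst PQ $ snd PQ * L (mb PQ))"
    using assms by (simp add: linear_sum linear_scale)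
  finally show ?thesis .
qed

lemma norm_mat_eq: "norm (M :: real^'n::finite^'n) = sqrt (\<Sum>PQ\<in>UNIV. (M $ fst PQ $ snd PQ)\<^sup>2)"
proof -
  have "norm M = sqrt (\<Sum>p\<in>UNIV. (norm (M $ p))\<^sup>2)" by (simp add: norm_vec_def L2_set_def)
  also have "\<dots> = sqrt (\<Sum>p\<in>UNIV. \<Sum>q\<in>UNIV. (M $ p $ q)\<^sup>2)"
    by (simp add: norm_vec_def L2_set_def sum_nonneg)
  finally show ?thesis by (simp add: pair_sum[of "\<lambda>p q. (M $ p $ q)\<^sup>2"])
qed

lemma norm_mat_le: "norm (M :: real^'n::finite^'n) \<le> (\<Sum>PQ\<in>UNIV. \<bar>M $ fst PQ $ snd PQ\<bar>)"
proof -
  have "norm M \<le> (\<Sum>p\<in>UNIV. \<bar>norm (M $ p)\<bar>)"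
    using L2_set_le_sum_abs[of "\<lambda>p. norm (M $ p)" UNIV] by (simp add: norm_vec_def)
  also have "\<dots> \<le> (\<Sum>p\<in>UNIV. \<Sum>q\<in>UNIV. \<bar>M $ p $ q\<bar>)"
    by (rule sum_mono) (simp add: norm_le_l1_cart)
  finally show ?thesis by (simp add: pair_sum[of "\<lambda>p q. \<bar>M $ p $ q\<bar>"])
qed

lemma entry_le_norm: "\<bar>(M :: real^'n::finite^'n) $ p $ q\<bar> \<le> norm M"
  using component_le_norm_cart[of "M $ p" q] Finite_Cartesian_Product.norm_nth_le[where x=M and i=p] by (simp add: order_trans)

lemma gd_scale:
  assumes "0 \<le> c" "gd S W (c * s) K f"
  shows "gd S W s (\<lambda>l. c * K l) f"
  using assms unfolding gd_def gdm_def bdm_def by (simp add: algebra_simps)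

lemma partial_diff:
  fixes f :: "real^'n::finite \<Rightarrow> real"
  assumes "f differentiable (at x)" "g differentiable (at x)"
  shows "partial p (\<lambda>y. f y - g y) x = partial p f x - partial p g x"
proof -
  have "g' differentiable (at x)" if "g' = (\<lambda>y. - 1 * g y)" for g' using assms(2) that by simp
  then have "partial p (\<lambda>y. f y + (- 1) * g y) x = partial p f x + partial p (\<lambda>y. (- 1) * g y) x"
    using partial_add[OF assms(1)] by blast
  also have "partial p (\<lambda>y. (- 1) * g y) x = - 1 * partial p g x" by (rule partial_cmult[OF assms(2)])
  finally show ?thesis by simp
qed

lemma smooth_of_gd: "gd S W s K f \<Longrightarrow> smooth_cl S f"
  unfolding gd_def gdm_def smm_def ucm_def smooth_cl_def by (meson order_refl)

lemma sm_of_smooth: "smooth_cl S f \<Longrightarrow> sm S f"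
  unfolding sm_def smooth_cl_def by blast

lemma MI0: "(MI 0 :: ('n::finite \<Rightarrow> nat) set) = {\<lambda>_. 0}"
  unfolding MI_def by (auto simp: fun_eq_iff)

lemma canon0: "canon (\<lambda>_::'n::finite. 0) = []"
  unfolding canon_def by (simp add: concat_eq_Nil_conv)

lemma Dm0: "Dm (\<lambda>_::'n::finite. 0) f = f"
  by (simp add: Dm_canon canon0)

lemma gd_zero0: "gd S W s (\<lambda>_. 0) (\<lambda>y::real^'n::finite. 0)"
  unfolding gd_def gdm_def smm_def ucm_def bdm_def
  by (auto simp: Dl_const intro: uniformly_continuous_on_const)

definition KG :: "real \<Rightarrow> (nat \<Rightarrow> real) \<Rightarrow> nat \<Rightarrow> real" where
  "KG nn Ka l = nn * (2 ^ l * Ka (Suc l) * Ka (Suc l))"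

definition KU :: "real \<Rightarrow> real \<Rightarrow> real \<Rightarrow> (nat \<Rightarrow> real) \<Rightarrow> nat \<Rightarrow> real" where
  "KU nn CL ch Ka l = CL * (ch + KG nn Ka l)"

primrec KA :: "real \<Rightarrow> real \<Rightarrow> real \<Rightarrow> real \<Rightarrow> nat \<Rightarrow> nat \<Rightarrow> real" where
  "KA nn CL ch \<sigma> 0 = (\<lambda>_. 0)"
| "KA nn CL ch \<sigma> (Suc j) = Ksqrt \<sigma> (KU nn CL ch (KA nn CL ch \<sigma> j))"

definition KEf :: "real \<Rightarrow> (nat \<Rightarrow> real) \<Rightarrow> (nat \<Rightarrow> real) \<Rightarrow> (nat \<Rightarrow> real) \<Rightarrow> nat \<Rightarrow> real" where
  "KEf nn Kd Ka Ka' l = nn * (2 ^ l * Kd (Suc l) * Ka (Suc l) + 2 ^ l * Ka' (Suc l) * Kd (Suc l))"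

primrec KD :: "real \<Rightarrow> real \<Rightarrow> real \<Rightarrow> real \<Rightarrow> nat \<Rightarrow> nat \<Rightarrow> real" where
  "KD nn CL ch \<sigma> 0 = KA nn CL ch \<sigma> 1"
| "KD nn CL ch \<sigma> (Suc j) = (\<lambda>l. 2 ^ l * (CL * KEf nn (KD nn CL ch \<sigma> j) (KA nn CL ch \<sigma> j) (KA nn CL ch \<sigma> (Suc j)) l)
      * Kinv (2 * sqrt \<sigma>) (\<lambda>l. KA nn CL ch \<sigma> (Suc j) l + KA nn CL ch \<sigma> (Suc (Suc j)) l) l)"

lemma Kok_KG: "Kok Ka \<Longrightarrow> 0 \<le> nn \<Longrightarrow> Kok (KG nn Ka)"
  unfolding KG_def by (intro Kok_cmult Kok_mult Kok_shift) auto

lemma Kok_KU: "Kok Ka \<Longrightarrow> 0 \<le> nn \<Longrightarrow> 0 \<le> CL \<Longrightarrow> 0 \<le> ch \<Longrightarrow> Kok (KU nn CL ch Ka)"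
  unfolding KU_def by (intro Kok_cmult Kok_add Kok_const Kok_KG) auto

lemma Kok_KA: "0 \<le> nn \<Longrightarrow> 0 \<le> CL \<Longrightarrow> 0 \<le> ch \<Longrightarrow> Kok (KA nn CL ch \<sigma> j)"
  by (induction j) (auto intro!: Kok_Ksqrt Kok_KU Kok_const)

lemma Kok_KEf: "Kok Kd \<Longrightarrow> Kok Ka \<Longrightarrow> Kok Ka' \<Longrightarrow> 0 \<le> nn \<Longrightarrow> Kok (KEf nn Kd Ka Ka')"
  unfolding KEf_def by (intro Kok_cmult Kok_add Kok_mult Kok_shift) auto

lemma Kok_KD: "0 \<le> nn \<Longrightarrow> 0 \<le> CL \<Longrightarrow> 0 \<le> ch \<Longrightarrow> 0 < \<sigma> \<Longrightarrow> Kok (KD nn CL ch \<sigma> j)"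
proof (induction j)
  case 0 then show ?case by (simp only: KD.simps) (rule Kok_KA)
next
  case (Suc j)
  show ?case unfolding KD.simps
    by (intro Kok_mult Kok_cmult Kok_KEf Kok_Kinv Kok_add Kok_KA Suc) (use Suc.prems in auto)
qed

definition Gm :: "(nat \<Rightarrow> real) \<Rightarrow> (nat \<times> nat \<Rightarrow> real^'n::finite \<Rightarrow> real) \<Rightarrow> real^'n \<Rightarrow> real^'n^'n" where
  "Gm \<mu> a x = (\<Sum>i<CARD('n). inverse ((\<mu> (Suc i))\<^sup>2) *\<^sub>R outer (grad (a (i,i)) x) (grad (a (i,i)) x))"

primrec Aseq :: "(nat \<times> nat \<Rightarrow> real^'n::finite^'n \<Rightarrow> real) \<Rightarrow> (real^'n \<Rightarrow> real^'n^'n) \<Rightarrow> (nat \<Rightarrow> real)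
    \<Rightarrow> nat \<Rightarrow> nat \<times> nat \<Rightarrow> real^'n \<Rightarrow> real" where
  "Aseq L h \<mu> 0 = (\<lambda>P x. 0)"
| "Aseq L h \<mu> (Suc j) = (\<lambda>P x. sqrt (L P (h x - Gm \<mu> (Aseq L h \<mu> j) x)))"

lemma Gm_entry:
  fixes a :: "nat \<times> nat \<Rightarrow> real^'n::finite \<Rightarrow> real" and p q :: 'n
  shows "Gm \<mu> a x $ p $ q = (\<Sum>i<CARD('n::finite). inverse ((\<mu> (Suc i))\<^sup>2) * (partial p (a (i,i)) x * partial q (a (i,i)) x))"
  by (simp add: Gm_def outer_def grad_def)

lemma Gm_sym:
  fixes a :: "nat \<times> nat \<Rightarrow> real^'n::finite \<Rightarrow> real"
  shows "transpose (Gm \<mu> a x) = Gm \<mu> a x"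
  by (simp add: vec_eq_iff transpose_def Gm_entry ac_simps)

locale iter =
  fixes S :: "(real^'n::finite) set" and W \<epsilon> \<sigma> CL ch :: real and \<mu> :: "nat \<Rightarrow> real"
    and h :: "real^'n \<Rightarrow> real^'n^'n" and L :: "nat \<times> nat \<Rightarrow> real^'n^'n \<Rightarrow> real"
  assumes S: "open S" and W: "1 \<le> W" and eps: "0 < \<epsilon>" "\<epsilon> \<le> 1"
    and mu: "\<And>i. i < CARD('n) \<Longrightarrow> inverse ((\<mu> (Suc i))\<^sup>2) * W\<^sup>2 \<le> \<epsilon>\<^sup>2"
    and sig: "0 < \<sigma>"
    and Llin: "\<And>P. P \<in> Pairs CARD('n) \<Longrightarrow> linear (L P)"
    and Ldec: "\<And>H. transpose H = H \<Longrightarrow> H = (\<Sum>P\<in>Pairs CARD('n). L P H *\<^sub>R outer (xi P) (xi P))"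
    and Lpos: "\<And>H P. transpose H = H \<Longrightarrow> norm (H - hstar) \<le> 2 * \<sigma> \<Longrightarrow> P \<in> Pairs CARD('n) \<Longrightarrow> \<sigma> \<le> L P H"
    and CL: "CL = (\<Sum>P\<in>Pairs CARD('n). \<Sum>PQ\<in>UNIV. \<bar>L P (mb PQ)\<bar>)"
    and ch: "1 \<le> ch"
    and hgd: "\<And>PQ. gd S W 1 (\<lambda>_. ch) (ents h PQ)"
    and hsym: "\<And>x. x \<in> S \<Longrightarrow> transpose (h x) = h x"
    and hnear: "\<And>x. x \<in> S \<Longrightarrow> norm (h x - hstar) \<le> \<sigma>"
begin


lemma W0: "0 \<le> W" using W by simp

lemma finite_Pairs: "finite (Pairs k)"
  unfolding Pairs_def by (rule finite_subset[of _ "{..k} \<times> {..k}"]) auto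

lemma CL0: "0 \<le> CL" unfolding CL by (simp add: sum_nonneg)

lemma CL_ge: "P \<in> Pairs CARD('n) \<Longrightarrow> (\<Sum>PQ\<in>UNIV. \<bar>L P (mb PQ)\<bar>) \<le> CL"
  unfolding CL by (rule member_le_sum) (auto simp: sum_nonneg finite_Pairs)

lemma gd_G:
  fixes a :: "nat \<times> nat \<Rightarrow> real^'n \<Rightarrow> real"
  assumes Ka: "Kok Ka" and a: "\<And>i. i < CARD('n) \<Longrightarrow> gd S W 1 Ka (a (i,i))"
  shows "gd S W (\<epsilon>\<^sup>2) (KG (real CARD('n)) Ka) (\<lambda>x. Gm \<mu> a x $ p $ q)"
proof -
  have t: "gd S W (\<epsilon>\<^sup>2) (\<lambda>l. 2 ^ l * Ka (Suc l) * Ka (Suc l))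
      (\<lambda>x. inverse ((\<mu> (Suc i))\<^sup>2) * (partial p (a (i,i)) x * partial q (a (i,i)) x))" if i: "i \<in> {..<CARD('n)}" for i
  proof -
    have m: "gd S W ((1 * W) * (1 * W)) (\<lambda>l. 2 ^ l * Ka (Suc l) * Ka (Suc l)) (\<lambda>x. partial p (a (i,i)) x * partial q (a (i,i)) x)"
      by (rule gd_mult[OF S W _ _ Kok_shift[OF Ka] Kok_shift[OF Ka] gd_shift gd_shift]) (use W a i in auto)
    have c: "gd S W (\<bar>inverse ((\<mu> (Suc i))\<^sup>2)\<bar> * ((1 * W) * (1 * W))) (\<lambda>l. 2 ^ l * Ka (Suc l) * Ka (Suc l))
        (\<lambda>x. inverse ((\<mu> (Suc i))\<^sup>2) * (partial p (a (i,i)) x * partial q (a (i,i)) x))"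
      by (rule gd_cmult[OF S m])
    show ?thesis
    proof (rule gd_weaken[OF c])
      show "\<bar>inverse ((\<mu> (Suc i))\<^sup>2)\<bar> * (1 * W * (1 * W)) \<le> \<epsilon>\<^sup>2"
        using mu[of i] i by (simp add: power2_eq_square)
    qed (use W Kok_nonneg[OF Kok_mult[OF Kok_shift[OF Ka] Kok_shift[OF Ka]]] in auto)
  qed
  have "gd S W (\<epsilon>\<^sup>2) (\<lambda>l. \<Sum>i<CARD('n). 2 ^ l * Ka (Suc l) * Ka (Suc l))
      (\<lambda>x. \<Sum>i<CARD('n). inverse ((\<mu> (Suc i))\<^sup>2) * (partial p (a (i,i)) x * partial q (a (i,i)) x))"
    by (rule gd_sum[OF S _ _ t]) auto
  then show ?thesis by (simp add: Gm_entry KG_def[abs_def])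
qed

lemma norm_G:
  fixes a :: "nat \<times> nat \<Rightarrow> real^'n \<Rightarrow> real"
  assumes Ka: "Kok Ka" and a: "\<And>i. i < CARD('n) \<Longrightarrow> gd S W 1 Ka (a (i,i))" and x: "x \<in> S"
  shows "norm (Gm \<mu> a x) \<le> \<epsilon>\<^sup>2 * ((real CARD('n))\<^sup>2 * KG (real CARD('n)) Ka 0)"
proof -
  have "norm (Gm \<mu> a x) \<le> (\<Sum>PQ\<in>UNIV. \<bar>Gm \<mu> a x $ fst PQ $ snd PQ\<bar>)" by (rule norm_mat_le)
  also have "\<dots> \<le> (\<Sum>PQ\<in>(UNIV :: ('n \<times> 'n) set). \<epsilon>\<^sup>2 * KG (real CARD('n)) Ka 0)"
    by (rule sum_mono) (rule gd_bd0[OF gd_G[where a=a, OF Ka a] x])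
  also have "\<dots> = \<epsilon>\<^sup>2 * ((real CARD('n))\<^sup>2 * KG (real CARD('n)) Ka 0)"
    using card_cartesian_product[of "UNIV::'n set" "UNIV::'n set"] by (simp add: power2_eq_square)
  finally show ?thesis .
qed

lemma gd_u:
  fixes a :: "nat \<times> nat \<Rightarrow> real^'n \<Rightarrow> real"
  assumes Ka: "Kok Ka" and a: "\<And>i. i < CARD('n) \<Longrightarrow> gd S W 1 Ka (a (i,i))" and P: "P \<in> Pairs CARD('n)"
  shows "gd S W 1 (KU (real CARD('n)) CL ch Ka) (\<lambda>x. L P (h x - Gm \<mu> a x))"
proof -
  have KGok: "Kok (KG (real CARD('n)) Ka)" by (rule Kok_KG[OF Ka]) simp
  have f: "gd S W 1 (\<lambda>l. ch + KG (real CARD('n)) Ka l) (\<lambda>x. ents h PQ x + (- 1) * Gm \<mu> a x $ fst PQ $ snd PQ)" for PQ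
  proof (rule gd_add[OF S _ hgd])
    have "gd S W (\<bar>- 1\<bar> * \<epsilon>\<^sup>2) (KG (real CARD('n)) Ka) (\<lambda>x. (- 1) * Gm \<mu> a x $ fst PQ $ snd PQ)"
      by (rule gd_cmult[OF S gd_G[where a=a, OF Ka a]])
    then show "gd S W 1 (KG (real CARD('n)) Ka) (\<lambda>x. (- 1) * Gm \<mu> a x $ fst PQ $ snd PQ)"
      by (rule gd_weaken) (use eps KGok W in \<open>auto simp: Kok_nonneg power_le_one\<close>)
  qed simp
  have g: "gd S W 1 (\<lambda>l. \<bar>L P (mb PQ)\<bar> * (ch + KG (real CARD('n)) Ka l))
      (\<lambda>x. L P (mb PQ) * (ents h PQ x + (- 1) * Gm \<mu> a x $ fst PQ $ snd PQ))" for PQ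
    by (rule gd_scale) (use gd_cmult[OF S f[of PQ], of "L P (mb PQ)"] in auto)
  have s: "gd S W 1 (\<lambda>l. \<Sum>PQ\<in>UNIV. \<bar>L P (mb PQ)\<bar> * (ch + KG (real CARD('n)) Ka l))
      (\<lambda>x. \<Sum>PQ\<in>UNIV. L P (mb PQ) * (ents h PQ x + (- 1) * Gm \<mu> a x $ fst PQ $ snd PQ))"
    by (rule gd_sum[OF S _ _ g]) auto
  have e: "(\<lambda>x. \<Sum>PQ\<in>UNIV. L P (mb PQ) * (ents h PQ x + (- 1) * Gm \<mu> a x $ fst PQ $ snd PQ)) = (\<lambda>x. L P (h x - Gm \<mu> a x))"
    by (rule ext, subst linear_expand[OF Llin[OF P]]) (simp add: ents_apply algebra_simps)
  have "gd S W 1 (\<lambda>l. \<Sum>PQ\<in>UNIV. \<bar>L P (mb PQ)\<bar> * (ch + KG (real CARD('n)) Ka l)) (\<lambda>x. L P (h x - Gm \<mu> a x))"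
    using s unfolding e .
  then show ?thesis
  proof (rule gd_weaken)
    fix l
    have "(\<Sum>PQ\<in>UNIV. \<bar>L P (mb PQ)\<bar> * (ch + KG (real CARD('n)) Ka l)) = (\<Sum>PQ\<in>UNIV. \<bar>L P (mb PQ)\<bar>) * (ch + KG (real CARD('n)) Ka l)"
      by (simp add: sum_distrib_right)
    also have "\<dots> \<le> CL * (ch + KG (real CARD('n)) Ka l)"
      using CL_ge[OF P] ch Kok_nonneg[OF KGok] by (intro mult_right_mono) auto
    finally show "(\<Sum>PQ\<in>UNIV. \<bar>L P (mb PQ)\<bar> * (ch + KG (real CARD('n)) Ka l)) \<le> KU (real CARD('n)) CL ch Ka l" by (simp add: KU_def)
    show "0 \<le> (\<Sum>PQ\<in>UNIV. \<bar>L P (mb PQ)\<bar> * (ch + KG (real CARD('n)) Ka l))"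
      using ch Kok_nonneg[OF KGok] by (intro sum_nonneg) auto
  qed (use W in auto)
qed

lemma sym_hG: "x \<in> S \<Longrightarrow> transpose (h x - Gm \<mu> a x) = h x - Gm \<mu> a x"
proof -
  assume x: "x \<in> S"
  have "transpose (h x - Gm \<mu> a x) = transpose (h x) - transpose (Gm \<mu> a x)" by (simp add: transpose_def vec_eq_iff)
  then show ?thesis using hsym[OF x] Gm_sym by simp
qed

lemma u_lower:
  fixes a :: "nat \<times> nat \<Rightarrow> real^'n \<Rightarrow> real"
  assumes Ka: "Kok Ka" and a: "\<And>i. i < CARD('n) \<Longrightarrow> gd S W 1 Ka (a (i,i))" and x: "x \<in> S"
    and small: "\<epsilon>\<^sup>2 * ((real CARD('n))\<^sup>2 * KG (real CARD('n)) Ka 0) \<le> \<sigma>" and P: "P \<in> Pairs CARD('n)"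
  shows "\<sigma> \<le> L P (h x - Gm \<mu> a x)"
proof (rule Lpos[OF sym_hG[OF x] _ P])
  have "norm (h x - Gm \<mu> a x - hstar) \<le> norm (h x - hstar) + norm (Gm \<mu> a x)"
    using norm_triangle_ineq4[of "h x - hstar" "Gm \<mu> a x"] by (simp add: algebra_simps)
  then show "norm (h x - Gm \<mu> a x - hstar) \<le> 2 * \<sigma>"
    using hnear[OF x] norm_G[where a=a, OF Ka a x] small by linarith
qed

lemma u_dec:
  fixes a :: "nat \<times> nat \<Rightarrow> real^'n \<Rightarrow> real"
  assumes x: "x \<in> S"
  shows "(\<Sum>P\<in>Pairs CARD('n). L P (h x - Gm \<mu> a x) *\<^sub>R outer (xi P) (xi P)) = h x - Gm \<mu> a x"
  using Ldec[OF sym_hG[OF x]] by simp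

end

context iter begin

lemma diag_Pairs: "i < CARD('n) \<Longrightarrow> (i,i) \<in> Pairs CARD('n)"
  by (simp add: Pairs_def)

lemma E_gd:
  fixes a b :: "nat \<times> nat \<Rightarrow> real^'n \<Rightarrow> real"
  assumes Ka: "Kok Ka" and Kb: "Kok Kb" and Kd: "Kok Kd" and s: "0 \<le> s"
    and a: "\<And>k. k < CARD('n) \<Longrightarrow> gd S W 1 Ka (a (k,k))"
    and b: "\<And>k. k < CARD('n) \<Longrightarrow> gd S W 1 Kb (b (k,k))"
    and d: "\<And>k. k < CARD('n) \<Longrightarrow> gd S W s Kd (\<lambda>x. a (k,k) x - b (k,k) x)"
  shows "gd S W (s * \<epsilon>\<^sup>2) (KEf (real CARD('n)) Kd Ka Kb) (\<lambda>x. Gm \<mu> a x $ p $ q - Gm \<mu> b x $ p $ q)"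
proof -
  let ?K1 = "\<lambda>l. 2 ^ l * Kd (Suc l) * Ka (Suc l)" and ?K2 = "\<lambda>l. 2 ^ l * Kb (Suc l) * Kd (Suc l)"
  let ?d = "\<lambda>k x. a (k,k) x - b (k,k) x"
  let ?T = "\<lambda>k x. inverse ((\<mu> (Suc k))\<^sup>2) * (partial p (?d k) x * partial q (a (k,k)) x + partial p (b (k,k)) x * partial q (?d k) x)"
  have t: "gd S W (s * \<epsilon>\<^sup>2) (\<lambda>l. ?K1 l + ?K2 l) (?T k)" if k: "k \<in> {..<CARD('n)}" for k
  proof -
    have k': "k < CARD('n)" using k by simp
    have m1: "gd S W ((s * W) * (1 * W)) ?K1 (\<lambda>x. partial p (?d k) x * partial q (a (k,k)) x)"
      by (rule gd_mult[OF S W _ _ Kok_shift[OF Kd] Kok_shift[OF Ka] gd_shift[OF d[OF k']] gd_shift[OF a[OF k']]])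
         (use s W in auto)
    have m2: "gd S W ((1 * W) * (s * W)) ?K2 (\<lambda>x. partial p (b (k,k)) x * partial q (?d k) x)"
      by (rule gd_mult[OF S W _ _ Kok_shift[OF Kb] Kok_shift[OF Kd] gd_shift[OF b[OF k']] gd_shift[OF d[OF k']]])
         (use s W in auto)
    have m1': "gd S W (s * W * W) ?K1 (\<lambda>x. partial p (?d k) x * partial q (a (k,k)) x)"
      using m1 by (simp add: ac_simps)
    have m2': "gd S W (s * W * W) ?K2 (\<lambda>x. partial p (b (k,k)) x * partial q (?d k) x)"
      using m2 by (simp add: ac_simps)
    have ad: "gd S W (s * W * W) (\<lambda>l. ?K1 l + ?K2 l) (\<lambda>x. partial p (?d k) x * partial q (a (k,k)) x + partial p (b (k,k)) x * partial q (?d k) x)"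
      by (rule gd_add[OF S _ m1' m2']) (use s W in auto)
    have c: "gd S W (\<bar>inverse ((\<mu> (Suc k))\<^sup>2)\<bar> * (s * W * W)) (\<lambda>l. ?K1 l + ?K2 l) (?T k)"
      by (rule gd_cmult[OF S ad])
    show ?thesis
    proof (rule gd_weaken[OF c])
      have "inverse ((\<mu> (Suc k))\<^sup>2) * W\<^sup>2 * s \<le> \<epsilon>\<^sup>2 * s" using mu[OF k'] s by (intro mult_right_mono) auto
      then show "\<bar>inverse ((\<mu> (Suc k))\<^sup>2)\<bar> * (s * W * W) \<le> s * \<epsilon>\<^sup>2" by (simp add: power2_eq_square ac_simps)
      show "0 \<le> \<bar>inverse ((\<mu> (Suc k))\<^sup>2)\<bar> * (s * W * W)" using s W by simp
      show "\<And>i. 0 \<le> ?K1 i + ?K2 i" using Ka Kb Kd by (simp add: Kok_nonneg)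
    qed (use W in auto)
  qed
  have sum: "gd S W (s * \<epsilon>\<^sup>2) (\<lambda>l. \<Sum>k<CARD('n). ?K1 l + ?K2 l) (\<lambda>x. \<Sum>k<CARD('n). ?T k x)"
    by (rule gd_sum[OF S _ _ t]) (use s in auto)
  have eq: "(\<Sum>k<CARD('n). ?T k x) = Gm \<mu> a x $ p $ q - Gm \<mu> b x $ p $ q" if x: "x \<in> S" for x
  proof -
    have "?T k x = inverse ((\<mu> (Suc k))\<^sup>2) * (partial p (a (k,k)) x * partial q (a (k,k)) x)
        - inverse ((\<mu> (Suc k))\<^sup>2) * (partial p (b (k,k)) x * partial q (b (k,k)) x)" if k: "k < CARD('n)" for k
    proof -
      have da: "a (k,k) differentiable (at x)" and db: "b (k,k) differentiable (at x)"
        using gd_diff_on[OF a[OF k]] gd_diff_on[OF b[OF k]] S x by (auto simp: differentiable_on_eq_differentiable_at)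
      show ?thesis unfolding partial_diff[OF da db, of p] partial_diff[OF da db, of q] by (simp add: algebra_simps)
    qed
    then show ?thesis by (simp add: Gm_entry sum_subtractf)
  qed
  have "gd S W (s * \<epsilon>\<^sup>2) (\<lambda>l. \<Sum>k<CARD('n). ?K1 l + ?K2 l) (\<lambda>x. Gm \<mu> a x $ p $ q - Gm \<mu> b x $ p $ q)"
    by (rule gd_cong[OF S eq sum])
  then show ?thesis by (simp add: KEf_def[abs_def])
qed

end

context iter begin

lemma KAok: "Kok (KA (real CARD('n)) CL ch \<sigma> i)"
  by (rule Kok_KA) (use CL0 ch in auto)

lemma KDok: "Kok (KD (real CARD('n)) CL ch \<sigma> i)"
  by (rule Kok_KD) (use CL0 ch sig in auto)

lemma A_gd:
  assumes small: "\<And>i. i \<le> j \<Longrightarrow> \<epsilon>\<^sup>2 * ((real CARD('n))\<^sup>2 * KG (real CARD('n)) (KA (real CARD('n)) CL ch \<sigma> i) 0) \<le> \<sigma>"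
  shows "i \<le> Suc j \<Longrightarrow> P \<in> Pairs CARD('n) \<Longrightarrow> gd S W 1 (KA (real CARD('n)) CL ch \<sigma> i) (Aseq L h \<mu> i P)"
proof (induction i arbitrary: P)
  case 0
  then show ?case using gd_zero0 by simp
next
  case (Suc i)
  have a: "\<And>k. k < CARD('n) \<Longrightarrow> gd S W 1 (KA (real CARD('n)) CL ch \<sigma> i) (Aseq L h \<mu> i (k,k))"
    using Suc.IH Suc.prems diag_Pairs by simp
  have u: "gd S W 1 (KU (real CARD('n)) CL ch (KA (real CARD('n)) CL ch \<sigma> i)) (\<lambda>x. L P (h x - Gm \<mu> (Aseq L h \<mu> i) x))"
    by (rule gd_u[where a="Aseq L h \<mu> i", OF KAok a Suc.prems(2)])
  have low: "\<And>x. x \<in> S \<Longrightarrow> \<sigma> \<le> L P (h x - Gm \<mu> (Aseq L h \<mu> i) x)"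
    by (rule u_lower[where a="Aseq L h \<mu> i", OF KAok a _ small Suc.prems(2)]) (use Suc.prems in auto)
  have "gd S W 1 (Ksqrt \<sigma> (KU (real CARD('n)) CL ch (KA (real CARD('n)) CL ch \<sigma> i))) (\<lambda>x. sqrt (L P (h x - Gm \<mu> (Aseq L h \<mu> i) x)))"
    by (rule gd_sqrt[OF S W Kok_KU[OF KAok] sig u low]) (use CL0 ch in auto)
  then show ?case by simp
qed

lemma A_low:
  assumes small: "\<And>i. i \<le> j \<Longrightarrow> \<epsilon>\<^sup>2 * ((real CARD('n))\<^sup>2 * KG (real CARD('n)) (KA (real CARD('n)) CL ch \<sigma> i) 0) \<le> \<sigma>"
    and i: "i \<le> j" and P: "P \<in> Pairs CARD('n)" and x: "x \<in> S"
  shows "\<sigma> \<le> L P (h x - Gm \<mu> (Aseq L h \<mu> i) x)" and "sqrt \<sigma> \<le> Aseq L h \<mu> (Suc i) P x"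
proof -
  have a: "\<And>k. k < CARD('n) \<Longrightarrow> gd S W 1 (KA (real CARD('n)) CL ch \<sigma> i) (Aseq L h \<mu> i (k,k))"
    using A_gd[OF small] i diag_Pairs by simp
  show l: "\<sigma> \<le> L P (h x - Gm \<mu> (Aseq L h \<mu> i) x)"
    by (rule u_lower[where a="Aseq L h \<mu> i", OF KAok a x small[OF i] P])
  then show "sqrt \<sigma> \<le> Aseq L h \<mu> (Suc i) P x" by simp
qed

lemma D_gd:
  assumes small: "\<And>i. i \<le> j \<Longrightarrow> \<epsilon>\<^sup>2 * ((real CARD('n))\<^sup>2 * KG (real CARD('n)) (KA (real CARD('n)) CL ch \<sigma> i) 0) \<le> \<sigma>"
  shows "i \<le> j \<Longrightarrow> P \<in> Pairs CARD('n) \<Longrightarrow>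
    gd S W (\<epsilon> ^ (2 * i)) (KD (real CARD('n)) CL ch \<sigma> i) (\<lambda>x. Aseq L h \<mu> i P x - Aseq L h \<mu> (Suc i) P x)"
proof (induction i arbitrary: P)
  case 0
  have "gd S W (\<bar>- 1\<bar> * 1) (KA (real CARD('n)) CL ch \<sigma> 1) (\<lambda>x. (- 1) * Aseq L h \<mu> 1 P x)"
    by (rule gd_cmult[OF S A_gd[OF small]]) (use 0 in auto)
  then show ?case by simp
next
  case (Suc i)
  let ?nn = "real CARD('n)"
  let ?A = "Aseq L h \<mu>"
  let ?KE = "KEf ?nn (KD ?nn CL ch \<sigma> i) (KA ?nn CL ch \<sigma> i) (KA ?nn CL ch \<sigma> (Suc i))"
  have ij: "i \<le> j" using Suc.prems by simp
  have gA: "\<And>k i'. k < CARD('n) \<Longrightarrow> i' \<le> Suc j \<Longrightarrow> gd S W 1 (KA ?nn CL ch \<sigma> i') (?A i' (k,k))"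
    using A_gd[OF small] diag_Pairs by blast
  have E: "gd S W (\<epsilon> ^ (2 * i) * \<epsilon>\<^sup>2) ?KE (\<lambda>x. Gm \<mu> (?A i) x $ p $ q - Gm \<mu> (?A (Suc i)) x $ p $ q)" for p q
  proof (rule E_gd[where a="?A i" and b="?A (Suc i)" and Ka="KA ?nn CL ch \<sigma> i" and Kb="KA ?nn CL ch \<sigma> (Suc i)"
        and Kd="KD ?nn CL ch \<sigma> i" and s="\<epsilon> ^ (2 * i)"])
    show "Kok (KA ?nn CL ch \<sigma> i)" "Kok (KA ?nn CL ch \<sigma> (Suc i))" "Kok (KD ?nn CL ch \<sigma> i)" by (rule KAok KAok KDok)+
    show "0 \<le> \<epsilon> ^ (2 * i)" using eps by simp
    fix k assume k: "k < CARD('n)"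
    show "gd S W 1 (KA ?nn CL ch \<sigma> i) (?A i (k,k))" using gA[OF k] ij by simp
    show "gd S W 1 (KA ?nn CL ch \<sigma> (Suc i)) (?A (Suc i) (k,k))" using gA[OF k, of "Suc i"] ij by (simp del: KA.simps Aseq.simps)
    show "gd S W (\<epsilon> ^ (2 * i)) (KD ?nn CL ch \<sigma> i) (\<lambda>x. ?A i (k,k) x - ?A (Suc i) (k,k) x)"
      using Suc.IH[OF ij diag_Pairs[OF k]] .
  qed
  have KEok: "Kok ?KE" by (rule Kok_KEf[OF KDok KAok KAok]) simp
  define V where "V x = (\<Sum>PQ\<in>UNIV. (- L P (mb PQ)) * (Gm \<mu> (?A i) x $ fst PQ $ snd PQ - Gm \<mu> (?A (Suc i)) x $ fst PQ $ snd PQ))" for x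
  have Vgd: "gd S W (\<epsilon> ^ (2 * Suc i)) (\<lambda>l. CL * ?KE l) V"
  proof -
    have t: "gd S W (\<epsilon> ^ (2 * i) * \<epsilon>\<^sup>2) (\<lambda>l. \<bar>- L P (mb PQ)\<bar> * ?KE l)
        (\<lambda>x. (- L P (mb PQ)) * (Gm \<mu> (?A i) x $ fst PQ $ snd PQ - Gm \<mu> (?A (Suc i)) x $ fst PQ $ snd PQ))" for PQ
      by (rule gd_scale) (use gd_cmult[OF S E, of "- L P (mb PQ)"] in auto)
    have "gd S W (\<epsilon> ^ (2 * i) * \<epsilon>\<^sup>2) (\<lambda>l. \<Sum>PQ\<in>UNIV. \<bar>- L P (mb PQ)\<bar> * ?KE l) V"
      unfolding V_def by (rule gd_sum[OF S _ _ t]) (use eps in auto)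
    then show ?thesis
    proof (rule gd_weaken)
      show "\<epsilon> ^ (2 * i) * \<epsilon>\<^sup>2 \<le> \<epsilon> ^ (2 * Suc i)" by (simp add: power_add power2_eq_square ac_simps)
      show "0 \<le> \<epsilon> ^ (2 * i) * \<epsilon>\<^sup>2" using eps by simp
      fix l
      have "(\<Sum>PQ\<in>UNIV. \<bar>- L P (mb PQ)\<bar> * ?KE l) = (\<Sum>PQ\<in>UNIV. \<bar>L P (mb PQ)\<bar>) * ?KE l"
        by (simp add: sum_distrib_right)
      also have "\<dots> \<le> CL * ?KE l" using CL_ge[OF Suc.prems(2)] Kok_nonneg[OF KEok] by (intro mult_right_mono) auto
      finally show "(\<Sum>PQ\<in>UNIV. \<bar>- L P (mb PQ)\<bar> * ?KE l) \<le> CL * ?KE l" .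
      show "0 \<le> (\<Sum>PQ\<in>UNIV. \<bar>- L P (mb PQ)\<bar> * ?KE l)" using Kok_nonneg[OF KEok] by (intro sum_nonneg) auto
    qed (use W in auto)
  qed
  have low1: "\<And>x. x \<in> S \<Longrightarrow> sqrt \<sigma> \<le> ?A (Suc i) P x" using A_low(2)[OF small ij Suc.prems(2)] .
  have low2: "\<And>x. x \<in> S \<Longrightarrow> sqrt \<sigma> \<le> ?A (Suc (Suc i)) P x" using A_low(2)[OF small Suc.prems] .
  have sumgd: "gd S W 1 (\<lambda>l. KA ?nn CL ch \<sigma> (Suc i) l + KA ?nn CL ch \<sigma> (Suc (Suc i)) l) (\<lambda>x. ?A (Suc i) P x + ?A (Suc (Suc i)) P x)"
    by (rule gd_add[OF S _ A_gd[OF small] A_gd[OF small]]) (use Suc.prems in auto)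
  have Rgd: "gd S W 1 (Kinv (2 * sqrt \<sigma>) (\<lambda>l. KA ?nn CL ch \<sigma> (Suc i) l + KA ?nn CL ch \<sigma> (Suc (Suc i)) l))
      (\<lambda>x. inverse (?A (Suc i) P x + ?A (Suc (Suc i)) P x))"
  proof (rule gd_inv[OF S W Kok_add[OF KAok KAok] _ sumgd])
    show "0 < 2 * sqrt \<sigma>" using sig by simp
    fix x assume "x \<in> S"
    then show "2 * sqrt \<sigma> \<le> ?A (Suc i) P x + ?A (Suc (Suc i)) P x"
      using low1[of x] low2[of x] by (simp del: Aseq.simps)
  qed
  have prod: "gd S W (\<epsilon> ^ (2 * Suc i) * 1) (KD ?nn CL ch \<sigma> (Suc i)) (\<lambda>x. V x * inverse (?A (Suc i) P x + ?A (Suc (Suc i)) P x))"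
    unfolding KD.simps
    by (rule gd_mult[OF S W _ _ Kok_cmult[OF KEok CL0] Kok_Kinv Vgd Rgd]) (use eps sig in auto)
  show ?case
  proof (rule gd_cong[OF S _ prod[unfolded mult_1_right]])
    fix x assume x: "x \<in> S"
    let ?ua = "L P (h x - Gm \<mu> (?A i) x)" and ?ub = "L P (h x - Gm \<mu> (?A (Suc i)) x)"
    have ua: "\<sigma> \<le> ?ua" by (rule A_low(1)[OF small ij Suc.prems(2) x])
    have ub: "\<sigma> \<le> ?ub" by (rule A_low(1)[OF small Suc.prems x])
    have lin: "linear (L P)" by (rule Llin[OF Suc.prems(2)])
    have "?ua - ?ub = L P ((h x - Gm \<mu> (?A i) x) - (h x - Gm \<mu> (?A (Suc i)) x))"
      by (simp add: linear_diff[OF lin])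
    also have "\<dots> = V x"
      unfolding V_def by (subst linear_expand[OF lin]) (simp add: algebra_simps)
    finally have Vx: "V x = ?ua - ?ub" by simp
    have key: "(u - v) * inverse (sqrt u + sqrt v) = sqrt u - sqrt v" if "0 < u" "0 < v" for u v :: real
    proof -
      have "u - v = (sqrt u - sqrt v) * (sqrt u + sqrt v)" using that by (simp add: algebra_simps)
      moreover have "sqrt u + sqrt v > 0" using that by (simp add: add_pos_pos)
      ultimately show ?thesis by (simp add: field_simps)
    qed
    have e1: "?A (Suc i) P x = sqrt ?ua" and e2: "?A (Suc (Suc i)) P x = sqrt ?ub" by simp_all
    show "V x * inverse (?A (Suc i) P x + ?A (Suc (Suc i)) P x) = ?A (Suc i) P x - ?A (Suc (Suc i)) P x"
      unfolding Vx e1 e2 by (rule key) (use ua ub sig in auto)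
  qed
qed

end

context iter begin

lemma final_out:
  assumes small: "\<And>i. i \<le> j \<Longrightarrow> \<epsilon>\<^sup>2 * ((real CARD('n))\<^sup>2 * KG (real CARD('n)) (KA (real CARD('n)) CL ch \<sigma> i) 0) \<le> \<sigma>"
    and ne: "S \<noteq> {}"
  defines "a \<equiv> Aseq L h \<mu> (Suc j)"
    and "E \<equiv> (\<lambda>x. Gm \<mu> (Aseq L h \<mu> j) x - Gm \<mu> (Aseq L h \<mu> (Suc j)) x)"
  shows "(\<forall>P\<in>Pairs CARD('n). smooth_cl S (a P)) \<and>
          (\<forall>P. smooth_cl S (ents E P)) \<and> (\<forall>x\<in>S. transpose (E x) = E x) \<and>
          (\<forall>x\<in>S. h x = (\<Sum>P\<in>Pairs CARD('n). (a P x)\<^sup>2 *\<^sub>R outer (xi P) (xi P))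
                        + (\<Sum>i<CARD('n). inverse ((\<mu> (Suc i))\<^sup>2) *\<^sub>R outer (grad (a (i,i)) x) (grad (a (i,i)) x))
                        + E x) \<and>
          (\<forall>P\<in>Pairs CARD('n). \<forall>x\<in>S. a P x \<ge> sqrt \<sigma>) \<and>
          (\<forall>k. cnorm S (Pairs CARD('n)) a k \<le> (\<Sum>i\<le>k. real (card (MI i :: ('n \<Rightarrow> nat) set)) * sqrt (real (card (Pairs CARD('n)))) * KA (real CARD('n)) CL ch \<sigma> (Suc j) i) * W ^ k \<and>
               cnorm S UNIV (ents E) k \<le> (\<Sum>i\<le>k. real (card (MI i :: ('n \<Rightarrow> nat) set)) * sqrt (real (card (UNIV :: ('n \<times> 'n) set)))
                   * KEf (real CARD('n)) (KD (real CARD('n)) CL ch \<sigma> j) (KA (real CARD('n)) CL ch \<sigma> j) (KA (real CARD('n)) CL ch \<sigma> (Suc j)) i)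
                   * \<epsilon> ^ (2 * (j + 1)) * W ^ k)"
proof -
  let ?nn = "real CARD('n)"
  let ?A = "Aseq L h \<mu>"
  let ?KE = "KEf ?nn (KD ?nn CL ch \<sigma> j) (KA ?nn CL ch \<sigma> j) (KA ?nn CL ch \<sigma> (Suc j))"
  have gA: "\<And>P. P \<in> Pairs CARD('n) \<Longrightarrow> gd S W 1 (KA ?nn CL ch \<sigma> (Suc j)) (a P)"
    unfolding a_def using A_gd[OF small] by blast
  have Egd: "gd S W (\<epsilon> ^ (2 * j) * \<epsilon>\<^sup>2) ?KE (ents E PQ)" for PQ
  proof -
    have "gd S W (\<epsilon> ^ (2 * j) * \<epsilon>\<^sup>2) ?KE (\<lambda>x. Gm \<mu> (?A j) x $ fst PQ $ snd PQ - Gm \<mu> (?A (Suc j)) x $ fst PQ $ snd PQ)"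
    proof (rule E_gd[where a="?A j" and b="?A (Suc j)" and Ka="KA ?nn CL ch \<sigma> j" and Kb="KA ?nn CL ch \<sigma> (Suc j)"
          and Kd="KD ?nn CL ch \<sigma> j" and s="\<epsilon> ^ (2 * j)"])
      show "Kok (KA ?nn CL ch \<sigma> j)" "Kok (KA ?nn CL ch \<sigma> (Suc j))" "Kok (KD ?nn CL ch \<sigma> j)" by (rule KAok KAok KDok)+
      show "0 \<le> \<epsilon> ^ (2 * j)" using eps by simp
      fix k assume k: "k < CARD('n)"
      show "gd S W 1 (KA ?nn CL ch \<sigma> j) (?A j (k,k))" using A_gd[OF small, where i=j] diag_Pairs[OF k] by simp
      show "gd S W 1 (KA ?nn CL ch \<sigma> (Suc j)) (?A (Suc j) (k,k))" using A_gd[OF small, where i="Suc j"] diag_Pairs[OF k] by (simp del: KA.simps Aseq.simps)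
      show "gd S W (\<epsilon> ^ (2 * j)) (KD ?nn CL ch \<sigma> j) (\<lambda>x. ?A j (k,k) x - ?A (Suc j) (k,k) x)"
        using D_gd[OF small order_refl diag_Pairs[OF k]] .
    qed
    moreover have "ents E PQ = (\<lambda>x. Gm \<mu> (?A j) x $ fst PQ $ snd PQ - Gm \<mu> (?A (Suc j)) x $ fst PQ $ snd PQ)"
      by (rule ext) (simp add: ents_apply E_def)
    ultimately show ?thesis by simp
  qed
  have s2: "\<epsilon> ^ (2 * j) * \<epsilon>\<^sup>2 = \<epsilon> ^ (2 * (j + 1))" by (simp add: power_add power2_eq_square ac_simps)
  have part1: "\<forall>P\<in>Pairs CARD('n). smooth_cl S (a P)" using gA smooth_of_gd by blast
  have part2: "\<forall>P. smooth_cl S (ents E P)" using Egd smooth_of_gd by blast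
  have part3: "\<forall>x\<in>S. transpose (E x) = E x"
    unfolding E_def by (simp add: transpose_def vec_eq_iff Gm_sym[unfolded transpose_def vec_eq_iff, simplified])
  have part4: "h x = (\<Sum>P\<in>Pairs CARD('n). (a P x)\<^sup>2 *\<^sub>R outer (xi P) (xi P))
                        + (\<Sum>i<CARD('n). inverse ((\<mu> (Suc i))\<^sup>2) *\<^sub>R outer (grad (a (i,i)) x) (grad (a (i,i)) x))
                        + E x" if x: "x \<in> S" for x
  proof -
    have sq: "(a P x)\<^sup>2 = L P (h x - Gm \<mu> (?A j) x)" if P: "P \<in> Pairs CARD('n)" for P
      using A_low(1)[where j=j and i=j, OF small order_refl P x] sig unfolding a_def by simp
    have "(\<Sum>P\<in>Pairs CARD('n). (a P x)\<^sup>2 *\<^sub>R outer (xi P) (xi P)) = h x - Gm \<mu> (?A j) x"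
      using u_dec[OF x, of "?A j"] sq by (simp cong: sum.cong)
    moreover have "(\<Sum>i<CARD('n). inverse ((\<mu> (Suc i))\<^sup>2) *\<^sub>R outer (grad (a (i,i)) x) (grad (a (i,i)) x)) = Gm \<mu> a x"
      by (simp add: Gm_def)
    ultimately show ?thesis unfolding E_def a_def by simp
  qed
  have part5: "\<forall>P\<in>Pairs CARD('n). \<forall>x\<in>S. a P x \<ge> sqrt \<sigma>"
    unfolding a_def using A_low(2)[where j=j and i=j, OF small order_refl] by blast
  have part6: "cnorm S (Pairs CARD('n)) a k \<le> (\<Sum>i\<le>k. real (card (MI i :: ('n \<Rightarrow> nat) set)) * sqrt (real (card (Pairs CARD('n)))) * KA ?nn CL ch \<sigma> (Suc j) i) * W ^ k" for k
  proof -
    have "cnorm S (Pairs CARD('n)) a k \<le> 1 * W ^ k * (\<Sum>i\<le>k. real (card (MI i :: ('n \<Rightarrow> nat) set)) * sqrt (real (card (Pairs CARD('n)))) * KA ?nn CL ch \<sigma> (Suc j) i)"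
      by (rule cnorm_bound[OF ne finite_Pairs _ W KAok gA]) simp
    then show ?thesis by (simp add: ac_simps)
  qed
  have part7: "cnorm S UNIV (ents E) k \<le> (\<Sum>i\<le>k. real (card (MI i :: ('n \<Rightarrow> nat) set)) * sqrt (real (card (UNIV :: ('n \<times> 'n) set))) * ?KE i)
                   * \<epsilon> ^ (2 * (j + 1)) * W ^ k" for k
  proof -
    have "cnorm S UNIV (ents E) k \<le> \<epsilon> ^ (2 * j) * \<epsilon>\<^sup>2 * W ^ k * (\<Sum>i\<le>k. real (card (MI i :: ('n \<Rightarrow> nat) set)) * sqrt (real (card (UNIV :: ('n \<times> 'n) set))) * ?KE i)"
    proof (rule cnorm_bound[OF ne _ _ W _ Egd])
      show "Kok ?KE" by (rule Kok_KEf[OF KDok KAok KAok]) simp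
    qed (use eps in auto)
    then show ?thesis unfolding s2 by (simp add: ac_simps)
  qed
  show ?thesis using part1 part2 part3 part4 part5 part6 part7 by blast
qed

end

lemma abs_le_sqrt_sum:
  fixes a :: "'j \<Rightarrow> real"
  assumes "finite J" "j \<in> J"
  shows "\<bar>a j\<bar> \<le> sqrt (\<Sum>i\<in>J. (a i)\<^sup>2)"
proof -
  have "(a j)\<^sup>2 \<le> (\<Sum>i\<in>J. (a i)\<^sup>2)" by (rule member_le_sum[OF assms(2)]) (use assms in auto)
  then have "sqrt ((a j)\<^sup>2) \<le> sqrt (\<Sum>i\<in>J. (a i)\<^sup>2)" by (rule real_sqrt_le_mono)
  then show ?thesis by simp
qed

lemma hyp_near:
  fixes h :: "real^'n::finite \<Rightarrow> real^'n^'n"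
  assumes bd: "bounded \<Omega>" and ne: "\<Omega> \<noteq> {}" and sm: "\<And>P. smooth_cl \<Omega> (ents h P)" and x: "x \<in> \<Omega>"
  shows "norm (h x - hstar) \<le> cnorm \<Omega> UNIV (ents (\<lambda>x. h x - hstar)) 0"
proof -
  have uc: "uniformly_continuous_on \<Omega> (Dm \<beta> (ents (\<lambda>x. h x - hstar) PQ))" if "\<beta> \<in> MI 0" for \<beta> PQ
  proof -
    have \<beta>: "\<beta> = (\<lambda>_. 0)" using that MI0 by auto
    have "uniformly_continuous_on \<Omega> (ents h PQ)" using sm[of PQ] unfolding smooth_cl_def by (metis Dl.simps(1))
    then have "uniformly_continuous_on \<Omega> (\<lambda>x. ents h PQ x - hstar $ fst PQ $ snd PQ)"
      by (intro uniformly_continuous_on_diff uniformly_continuous_on_const)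
    moreover have "(\<lambda>x. ents h PQ x - hstar $ fst PQ $ snd PQ) = ents (\<lambda>x. h x - hstar) PQ"
      by (rule ext) (simp add: ents_apply)
    ultimately show ?thesis unfolding \<beta> Dm0 by simp
  qed
  have "sqrt (\<Sum>PQ\<in>UNIV. (Dm (\<lambda>_. 0) (ents (\<lambda>x. h x - hstar) PQ) x)\<^sup>2) \<le> cnorm \<Omega> UNIV (ents (\<lambda>x. h x - hstar)) 0"
    by (rule cnorm_point[OF bd ne _ _ order_refl _ x]) (use uc MI0 in auto)
  then show ?thesis by (simp add: Dm0 ents_apply norm_mat_eq[of "h x - hstar"])
qed

lemma hyp_gd:
  fixes h :: "real^'n::finite \<Rightarrow> real^'n^'n"
  assumes S: "open \<Omega>" and bd: "bounded \<Omega>" and ne: "\<Omega> \<noteq> {}" and sm: "\<And>P. smooth_cl \<Omega> (ents h P)"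
    and hb: "\<And>i. 1 \<le> i \<Longrightarrow> cnorm \<Omega> UNIV (ents h) i \<le> W ^ i" and W: "1 \<le> W" and ch: "1 \<le> ch"
    and h0: "\<And>x PQ. x \<in> \<Omega> \<Longrightarrow> \<bar>ents h PQ x\<bar> \<le> ch"
  shows "gd \<Omega> W 1 (\<lambda>_. ch) (ents h PQ)"
  unfolding gd_def gdm_def smm_def ucm_def bdm_def
proof (intro allI conjI impI)
  fix m and ds :: "'n list" assume "length ds \<le> m"
  show "Dl ds (ents h PQ) differentiable_on \<Omega>" "uniformly_continuous_on \<Omega> (Dl ds (ents h PQ))"
    using sm[of PQ] unfolding smooth_cl_def by auto
next
  fix m and ds :: "'n list" and x assume x: "x \<in> \<Omega>"
  show "\<bar>Dl ds (ents h PQ) x\<bar> \<le> 1 * ch * W ^ length ds"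
  proof (cases "ds = []")
    case True then show ?thesis using h0[OF x] by simp
  next
    case False
    let ?\<beta> = "\<lambda>p. count (mset ds) p"
    have l: "1 \<le> length ds" using False by (cases ds) auto
    have "Dl ds (ents h PQ) x = Dm ?\<beta> (ents h PQ) x" by (rule Dl_Dm[OF S sm_of_smooth[OF sm] x])
    also have "\<bar>\<dots>\<bar> \<le> sqrt (\<Sum>PQ'\<in>UNIV. (Dm ?\<beta> (ents h PQ') x)\<^sup>2)" by (rule abs_le_sqrt_sum) auto
    also have "\<dots> \<le> cnorm \<Omega> UNIV (ents h) (length ds)"
    proof (rule cnorm_point[OF bd ne _ _ order_refl MI_count x])
      show "\<And>\<beta> j i. i \<le> length ds \<Longrightarrow> \<beta> \<in> MI i \<Longrightarrow> j \<in> UNIV \<Longrightarrow> uniformly_continuous_on \<Omega> (Dm \<beta> (ents h j))"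
        using sm unfolding smooth_cl_def Dm_canon by blast
    qed simp
    also have "\<dots> \<le> W ^ length ds" by (rule hb[OF l])
    also have "\<dots> \<le> 1 * ch * W ^ length ds" using ch W by simp
    finally show ?thesis .
  qed
qed

theorem lemma2p3:
  fixes \<sigma>s :: real
  assumes n2: "CARD('n::finite) \<ge> 2"
    and sig: "sigma_star_prop TYPE('n) \<sigma>s"
  shows "\<exists>\<sigma>0 (C :: nat \<Rightarrow> nat \<Rightarrow> real). 0 < \<sigma>0 \<and> \<sigma>0 < sqrt \<sigma>s \<and>
    (\<forall>(\<Omega> :: (real^'n) set) (\<mu> :: nat \<Rightarrow> real) (h :: real^'n \<Rightarrow> real^'n^'n).
       open \<Omega> \<and> connected \<Omega> \<and> bounded \<Omega> \<and> \<Omega> \<noteq> {} \<and>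
       1 \<le> \<mu> 0 \<and> (\<forall>i<CARD('n). \<mu> i \<le> \<mu> (Suc i)) \<and>
       (\<forall>P. smooth_cl \<Omega> (ents h P)) \<and> (\<forall>x\<in>\<Omega>. transpose (h x) = h x) \<and>
       cnorm \<Omega> UNIV (ents (\<lambda>x. h x - hstar)) 0 + \<mu> 0 / \<mu> 1 \<le> 2 * \<sigma>0 \<and>
       (\<forall>i\<ge>1. cnorm \<Omega> UNIV (ents h) i \<le> \<mu> 0 ^ i)
     \<longrightarrow>
       (\<forall>j::nat. \<exists>(a :: nat \<times> nat \<Rightarrow> real^'n \<Rightarrow> real) (E :: real^'n \<Rightarrow> real^'n^'n).
          (\<forall>P\<in>Pairs CARD('n). smooth_cl \<Omega> (a P)) \<and>
          (\<forall>P. smooth_cl \<Omega> (ents E P)) \<and> (\<forall>x\<in>\<Omega>. transpose (E x) = E x) \<and>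
          (\<forall>x\<in>\<Omega>. h x = (\<Sum>P\<in>Pairs CARD('n). (a P x)\<^sup>2 *\<^sub>R outer (xi P) (xi P))
                        + (\<Sum>i<CARD('n). inverse ((\<mu> (Suc i))\<^sup>2) *\<^sub>R outer (grad (a (i,i)) x) (grad (a (i,i)) x))
                        + E x) \<and>
          (\<forall>P\<in>Pairs CARD('n). \<forall>x\<in>\<Omega>. a P x \<ge> sqrt \<sigma>s) \<and>
          (\<forall>k. cnorm \<Omega> (Pairs CARD('n)) a k \<le> C j k * \<mu> 0 ^ k \<and>
               cnorm \<Omega> UNIV (ents E) k \<le> C j k * (\<mu> 0 / \<mu> 1) ^ (2 * (j + 1)) * \<mu> 0 ^ k)))"
proof -
  obtain L :: "nat \<times> nat \<Rightarrow> real^'n^'n \<Rightarrow> real" where sp: "\<sigma>s > 0"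
    and Llin: "\<forall>P\<in>Pairs CARD('n). linear (L P)"
    and Ldec: "\<forall>H. transpose H = H \<longrightarrow> H = (\<Sum>P\<in>Pairs CARD('n). L P H *\<^sub>R outer (xi P) (xi P))"
    and Lpos: "\<forall>H. transpose H = H \<and> norm (H - (hstar :: real^'n^'n)) \<le> 2 * \<sigma>s \<longrightarrow> (\<forall>P\<in>Pairs CARD('n). L P H \<ge> \<sigma>s)"
    using sig unfolding sigma_star_prop_def by blast
  define CL where "CL = (\<Sum>P\<in>Pairs CARD('n). \<Sum>PQ\<in>UNIV. \<bar>L P (mb PQ)\<bar>)"
  define ch where "ch = 1 + (\<Sum>PQ\<in>(UNIV :: ('n \<times> 'n) set). \<bar>(hstar :: real^'n^'n) $ fst PQ $ snd PQ\<bar>)"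
  define \<sigma>0 where "\<sigma>0 = min \<sigma>s 1 / 4"
  define M where "M i = (real CARD('n))\<^sup>2 * KG (real CARD('n)) (KA (real CARD('n)) CL ch \<sigma>s i) 0" for i
  define \<delta> where "\<delta> j = \<sigma>s / (1 + (\<Sum>i\<le>j. M i))" for j
  define Ca where "Ca j k = (\<Sum>i\<le>k. real (card (MI i :: ('n \<Rightarrow> nat) set)) * sqrt (real (card (Pairs CARD('n)))) * KA (real CARD('n)) CL ch \<sigma>s (Suc j) i)" for j k
  define Ce where "Ce j k = (\<Sum>i\<le>k. real (card (MI i :: ('n \<Rightarrow> nat) set)) * sqrt (real (card (UNIV :: ('n \<times> 'n) set)))
                   * KEf (real CARD('n)) (KD (real CARD('n)) CL ch \<sigma>s j) (KA (real CARD('n)) CL ch \<sigma>s j) (KA (real CARD('n)) CL ch \<sigma>s (Suc j)) i)" for j k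
  define C where "C j k = max (max (Ca j k) (Ce j k)) (max (Ca 0 k) (Ce 0 k / \<delta> j ^ j))" for j k
  have CL0: "0 \<le> CL" unfolding CL_def by (simp add: sum_nonneg)
  have ch1: "1 \<le> ch" unfolding ch_def by (simp add: sum_nonneg)
  have M0: "0 \<le> M i" for i
  proof -
    have KAok: "Kok (KA (real CARD('n)) CL ch \<sigma>s i)" by (rule Kok_KA) (use CL0 ch1 in auto)
    have "Kok (KG (real CARD('n)) (KA (real CARD('n)) CL ch \<sigma>s i))" by (rule Kok_KG[OF KAok]) simp
    then show ?thesis unfolding M_def by (simp add: Kok_nonneg)
  qed
  have Mz: "M 0 = 0" by (simp add: M_def KG_def)
  have \<delta>pos: "0 < \<delta> j" for j unfolding \<delta>_def using sp M0 by (simp add: sum_nonneg add_pos_nonneg)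
  show ?thesis
  proof (intro exI[of _ \<sigma>0] exI[of _ C] conjI allI impI)
    show "0 < \<sigma>0" unfolding \<sigma>0_def using sp by simp
    show "\<sigma>0 < sqrt \<sigma>s"
    proof (cases "\<sigma>s \<le> 1")
      case True
      have "\<sigma>s * \<sigma>s \<le> 1 * \<sigma>s" using True sp by (intro mult_right_mono) auto
      then have "sqrt (\<sigma>s\<^sup>2) \<le> sqrt \<sigma>s" by (intro real_sqrt_le_mono) (simp add: power2_eq_square)
      then have "\<sigma>s \<le> sqrt \<sigma>s" using sp by simp
      then show ?thesis unfolding \<sigma>0_def using sp True by simp
    next
      case False
      then have "1 < sqrt \<sigma>s" by simp
      then show ?thesis unfolding \<sigma>0_def using False by linarith
    qed
    fix \<Omega> :: "(real^'n) set" and \<mu> :: "nat \<Rightarrow> real" and h :: "real^'n \<Rightarrow> real^'n^'n" and j :: nat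
    assume H: "open \<Omega> \<and> connected \<Omega> \<and> bounded \<Omega> \<and> \<Omega> \<noteq> {} \<and>
       1 \<le> \<mu> 0 \<and> (\<forall>i<CARD('n). \<mu> i \<le> \<mu> (Suc i)) \<and>
       (\<forall>P. smooth_cl \<Omega> (ents h P)) \<and> (\<forall>x\<in>\<Omega>. transpose (h x) = h x) \<and>
       cnorm \<Omega> UNIV (ents (\<lambda>x. h x - hstar)) 0 + \<mu> 0 / \<mu> 1 \<le> 2 * \<sigma>0 \<and>
       (\<forall>i\<ge>1. cnorm \<Omega> UNIV (ents h) i \<le> \<mu> 0 ^ i)"
    then have So: "open \<Omega>" and bd: "bounded \<Omega>" and ne: "\<Omega> \<noteq> {}" and mu0: "1 \<le> \<mu> 0"
      and mumono: "\<And>i. i < CARD('n) \<Longrightarrow> \<mu> i \<le> \<mu> (Suc i)" and sm: "\<And>P. smooth_cl \<Omega> (ents h P)"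
      and hsym: "\<And>x. x \<in> \<Omega> \<Longrightarrow> transpose (h x) = h x"
      and c0: "cnorm \<Omega> UNIV (ents (\<lambda>x. h x - hstar)) 0 + \<mu> 0 / \<mu> 1 \<le> 2 * \<sigma>0"
      and hb: "\<And>i. 1 \<le> i \<Longrightarrow> cnorm \<Omega> UNIV (ents h) i \<le> \<mu> 0 ^ i"
      by auto
    define W where "W = \<mu> 0"
    define \<epsilon> where "\<epsilon> = \<mu> 0 / \<mu> 1"
    have W1: "1 \<le> W" unfolding W_def by (rule mu0)
    have mu01: "\<mu> 0 \<le> \<mu> 1" using mumono[of 0] n2 by simp
    have mu1i: "\<mu> 1 \<le> \<mu> (Suc i)" if "i < CARD('n)" for i
      using that
    proof (induction i)
      case 0 then show ?case by simp
    next
      case (Suc i)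
      then show ?case using mumono[of "Suc i"] by simp
    qed
    have near: "norm (h x - hstar) \<le> cnorm \<Omega> UNIV (ents (\<lambda>x. h x - hstar)) 0" if "x \<in> \<Omega>" for x
      by (rule hyp_near[OF bd ne sm that])
    obtain x0 where x0: "x0 \<in> \<Omega>" using ne by blast
    have cn0: "0 \<le> cnorm \<Omega> UNIV (ents (\<lambda>x. h x - hstar)) 0" using near[OF x0] norm_ge_zero order_trans by blast
    have eps0: "0 < \<epsilon>" unfolding \<epsilon>_def using mu0 mu01 by simp
    have eps_le: "\<epsilon> \<le> 2 * \<sigma>0" unfolding \<epsilon>_def using c0 cn0 by simp
    have \<sigma>0le: "\<sigma>0 \<le> \<sigma>s / 4" "\<sigma>0 \<le> 1/4" unfolding \<sigma>0_def by auto
    have eps1: "\<epsilon> \<le> 1" using eps_le \<sigma>0le by simp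
    have hnear: "norm (h x - hstar) \<le> \<sigma>s" if "x \<in> \<Omega>" for x
      using near[OF that] c0 eps0 \<sigma>0le sp unfolding \<epsilon>_def by simp
    have h0: "\<bar>ents h PQ x\<bar> \<le> ch" if x: "x \<in> \<Omega>" for x PQ
    proof -
      have "\<bar>ents h PQ x\<bar> \<le> \<bar>(hstar :: real^'n^'n) $ fst PQ $ snd PQ\<bar> + \<bar>(h x - hstar) $ fst PQ $ snd PQ\<bar>"
        by (simp add: ents_apply abs_triangle_ineq[of _ "_ - _", simplified] abs_triangle_ineq4)
      also have "\<dots> \<le> (\<Sum>PQ\<in>(UNIV :: ('n \<times> 'n) set). \<bar>(hstar :: real^'n^'n) $ fst PQ $ snd PQ\<bar>) + 1"
      proof (rule add_mono)
        show "\<bar>(hstar :: real^'n^'n) $ fst PQ $ snd PQ\<bar> \<le> (\<Sum>PQ\<in>(UNIV :: ('n \<times> 'n) set). \<bar>(hstar :: real^'n^'n) $ fst PQ $ snd PQ\<bar>)"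
          by (rule member_le_sum) auto
        have "\<bar>(h x - hstar) $ fst PQ $ snd PQ\<bar> \<le> norm (h x - hstar)" by (rule entry_le_norm)
        then show "\<bar>(h x - hstar) $ fst PQ $ snd PQ\<bar> \<le> 1" using near[OF x] c0 eps0 \<sigma>0le unfolding \<epsilon>_def by simp
      qed
      finally show ?thesis unfolding ch_def by simp
    qed
    have hgd: "gd \<Omega> W 1 (\<lambda>_. ch) (ents h PQ)" for PQ
      by (rule hyp_gd[OF So bd ne sm _ W1 ch1 h0]) (use hb in \<open>auto simp: W_def\<close>)
    have mu: "inverse ((\<mu> (Suc i))\<^sup>2) * W\<^sup>2 \<le> \<epsilon>\<^sup>2" if i: "i < CARD('n)" for i
    proof -
      have p1: "0 < \<mu> 1" using mu0 mu01 by simp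
      have "W / \<mu> (Suc i) \<le> W / \<mu> 1" using mu1i[OF i] p1 W1 by (intro divide_left_mono) auto
      moreover have "0 \<le> W / \<mu> (Suc i)" using mu1i[OF i] p1 W1 by simp
      ultimately have "(W / \<mu> (Suc i))\<^sup>2 \<le> (W / \<mu> 1)\<^sup>2" by (rule power_mono)
      then show ?thesis unfolding \<epsilon>_def W_def by (simp add: power_divide field_simps)
    qed
    have Llin': "\<And>P. P \<in> Pairs CARD('n) \<Longrightarrow> linear (L P)" using Llin by blast
    have Ldec': "\<And>H. transpose H = H \<Longrightarrow> H = (\<Sum>P\<in>Pairs CARD('n). L P H *\<^sub>R outer (xi P) (xi P))" using Ldec by blast
    have Lpos': "\<And>H P. transpose H = H \<Longrightarrow> norm (H - hstar) \<le> 2 * \<sigma>s \<Longrightarrow> P \<in> Pairs CARD('n) \<Longrightarrow> \<sigma>s \<le> L P H"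
      using Lpos by blast
    interpret it: iter \<Omega> W \<epsilon> \<sigma>s CL ch \<mu> h L
      by (rule iter.intro[where S=\<Omega> and W=W and \<epsilon>=\<epsilon> and \<sigma>=\<sigma>s and CL=CL and ch=ch and \<mu>=\<mu> and h=h and L=L, OF So W1 eps0 eps1 mu sp Llin' Ldec' Lpos' CL_def ch1 hgd hsym hnear])
    show "\<exists>(a :: nat \<times> nat \<Rightarrow> real^'n \<Rightarrow> real) (E :: real^'n \<Rightarrow> real^'n^'n).
          (\<forall>P\<in>Pairs CARD('n). smooth_cl \<Omega> (a P)) \<and>
          (\<forall>P. smooth_cl \<Omega> (ents E P)) \<and> (\<forall>x\<in>\<Omega>. transpose (E x) = E x) \<and>
          (\<forall>x\<in>\<Omega>. h x = (\<Sum>P\<in>Pairs CARD('n). (a P x)\<^sup>2 *\<^sub>R outer (xi P) (xi P))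
                        + (\<Sum>i<CARD('n). inverse ((\<mu> (Suc i))\<^sup>2) *\<^sub>R outer (grad (a (i,i)) x) (grad (a (i,i)) x))
                        + E x) \<and>
          (\<forall>P\<in>Pairs CARD('n). \<forall>x\<in>\<Omega>. a P x \<ge> sqrt \<sigma>s) \<and>
          (\<forall>k. cnorm \<Omega> (Pairs CARD('n)) a k \<le> C j k * \<mu> 0 ^ k \<and>
               cnorm \<Omega> UNIV (ents E) k \<le> C j k * (\<mu> 0 / \<mu> 1) ^ (2 * (j + 1)) * \<mu> 0 ^ k)"
    proof (cases "\<epsilon>\<^sup>2 \<le> \<delta> j")
      case True
      have small: "\<epsilon>\<^sup>2 * ((real CARD('n))\<^sup>2 * KG (real CARD('n)) (KA (real CARD('n)) CL ch \<sigma>s i) 0) \<le> \<sigma>s" if i: "i \<le> j" for i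
      proof -
        have "M i \<le> (\<Sum>i\<le>j. M i)" by (rule member_le_sum) (use i M0 in auto)
        then have "\<epsilon>\<^sup>2 * M i \<le> \<delta> j * (1 + (\<Sum>i\<le>j. M i))"
          using True M0 \<delta>pos[of j] by (intro mult_mono) (auto simp: sum_nonneg)
        also have "\<dots> = \<sigma>s"
        proof -
          have "0 < 1 + (\<Sum>i\<le>j. M i)" using M0 by (simp add: sum_nonneg add_pos_nonneg)
          then show ?thesis unfolding \<delta>_def by simp
        qed
        finally show ?thesis unfolding M_def .
      qed
      note F = it.final_out[OF small ne]
      let ?a = "Aseq L h \<mu> (Suc j)" and ?E = "\<lambda>x. Gm \<mu> (Aseq L h \<mu> j) x - Gm \<mu> (Aseq L h \<mu> (Suc j)) x"
      have F1: "\<forall>P\<in>Pairs CARD('n). smooth_cl \<Omega> (?a P)" and F2: "\<forall>P. smooth_cl \<Omega> (ents ?E P)"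
        and F3: "\<forall>x\<in>\<Omega>. transpose (?E x) = ?E x"
        and F4: "\<forall>x\<in>\<Omega>. h x = (\<Sum>P\<in>Pairs CARD('n). (?a P x)\<^sup>2 *\<^sub>R outer (xi P) (xi P))
                        + (\<Sum>i<CARD('n). inverse ((\<mu> (Suc i))\<^sup>2) *\<^sub>R outer (grad (?a (i,i)) x) (grad (?a (i,i)) x))
                        + ?E x"
        and F5: "\<forall>P\<in>Pairs CARD('n). \<forall>x\<in>\<Omega>. ?a P x \<ge> sqrt \<sigma>s"
        and F6: "\<And>k. cnorm \<Omega> (Pairs CARD('n)) ?a k \<le> Ca j k * W ^ k"
        and F7: "\<And>k. cnorm \<Omega> UNIV (ents ?E) k \<le> Ce j k * \<epsilon> ^ (2 * (j + 1)) * W ^ k"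
        using F unfolding Ca_def Ce_def by blast+
      show ?thesis
      proof (intro exI[of _ ?a] exI[of _ ?E] conjI allI)
        fix k
        have W0: "0 \<le> W ^ k" using W1 by simp
        have e0: "0 \<le> \<epsilon> ^ (2 * (j + 1)) * W ^ k" using W1 eps0 by simp
        have "Ca j k * W ^ k \<le> C j k * W ^ k" unfolding C_def by (rule mult_right_mono[OF _ W0]) simp
        then show "cnorm \<Omega> (Pairs CARD('n)) ?a k \<le> C j k * \<mu> 0 ^ k" using F6[of k] unfolding W_def by linarith
        have "Ce j k * (\<epsilon> ^ (2 * (j + 1)) * W ^ k) \<le> C j k * (\<epsilon> ^ (2 * (j + 1)) * W ^ k)"
          unfolding C_def by (rule mult_right_mono[OF _ e0]) simp
        then show "cnorm \<Omega> UNIV (ents ?E) k \<le> C j k * (\<mu> 0 / \<mu> 1) ^ (2 * (j + 1)) * \<mu> 0 ^ k"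
          using F7[of k] unfolding W_def \<epsilon>_def by (simp add: mult.assoc)
      qed (use F1 F2 F3 F4 F5 in auto)
    next
      case False
      have small0: "\<epsilon>\<^sup>2 * ((real CARD('n))\<^sup>2 * KG (real CARD('n)) (KA (real CARD('n)) CL ch \<sigma>s i) 0) \<le> \<sigma>s" if i: "i \<le> 0" for i
        using i sp by (simp add: KG_def)
      note F = it.final_out[OF small0 ne]
      let ?a = "Aseq L h \<mu> (Suc 0)" and ?E = "\<lambda>x. Gm \<mu> (Aseq L h \<mu> 0) x - Gm \<mu> (Aseq L h \<mu> (Suc 0)) x"
      have F1: "\<forall>P\<in>Pairs CARD('n). smooth_cl \<Omega> (?a P)" and F2: "\<forall>P. smooth_cl \<Omega> (ents ?E P)"
        and F3: "\<forall>x\<in>\<Omega>. transpose (?E x) = ?E x"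
        and F4: "\<forall>x\<in>\<Omega>. h x = (\<Sum>P\<in>Pairs CARD('n). (?a P x)\<^sup>2 *\<^sub>R outer (xi P) (xi P))
                        + (\<Sum>i<CARD('n). inverse ((\<mu> (Suc i))\<^sup>2) *\<^sub>R outer (grad (?a (i,i)) x) (grad (?a (i,i)) x))
                        + ?E x"
        and F5: "\<forall>P\<in>Pairs CARD('n). \<forall>x\<in>\<Omega>. ?a P x \<ge> sqrt \<sigma>s"
        and F6: "\<And>k. cnorm \<Omega> (Pairs CARD('n)) ?a k \<le> Ca 0 k * W ^ k"
        and F7: "\<And>k. cnorm \<Omega> UNIV (ents ?E) k \<le> Ce 0 k * \<epsilon> ^ (2 * (0 + 1)) * W ^ k"
        using F unfolding Ca_def Ce_def by blast+
      have dj: "\<delta> j ^ j \<le> \<epsilon> ^ (2 * j)"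
      proof -
        have "\<delta> j ^ j \<le> (\<epsilon>\<^sup>2) ^ j" using False \<delta>pos[of j] by (intro power_mono) auto
        then show ?thesis by (simp add: power_mult)
      qed
      have djp: "0 < \<delta> j ^ j" using \<delta>pos[of j] by simp
      have Ce0: "0 \<le> Ce 0 k" for k
      proof -
        have "Kok (KEf (real CARD('n)) (KD (real CARD('n)) CL ch \<sigma>s 0) (KA (real CARD('n)) CL ch \<sigma>s 0) (KA (real CARD('n)) CL ch \<sigma>s (Suc 0)))"
          by (rule Kok_KEf[OF it.KDok it.KAok it.KAok]) simp
        then show ?thesis unfolding Ce_def by (intro sum_nonneg mult_nonneg_nonneg) (auto simp: Kok_nonneg)
      qed
      show ?thesis
      proof (intro exI[of _ ?a] exI[of _ ?E] conjI allI)
        fix k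
        have W0: "0 \<le> W ^ k" using W1 by simp
        have "Ca 0 k * W ^ k \<le> C j k * W ^ k" unfolding C_def by (rule mult_right_mono[OF _ W0]) simp
        then show "cnorm \<Omega> (Pairs CARD('n)) ?a k \<le> C j k * \<mu> 0 ^ k" using F6[of k] unfolding W_def by linarith
        have "Ce 0 k * \<epsilon>\<^sup>2 * \<delta> j ^ j \<le> Ce 0 k * \<epsilon>\<^sup>2 * \<epsilon> ^ (2 * j)"
          using dj Ce0[of k] by (intro mult_left_mono) auto
        also have "\<dots> = Ce 0 k * \<epsilon> ^ (2 * (j + 1))" by (simp add: power_add power2_eq_square ac_simps)
        finally have "Ce 0 k * \<epsilon>\<^sup>2 \<le> Ce 0 k / \<delta> j ^ j * \<epsilon> ^ (2 * (j + 1))"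
          using djp by (simp add: field_simps)
        also have "\<dots> \<le> C j k * \<epsilon> ^ (2 * (j + 1))"
          unfolding C_def by (rule mult_right_mono) (use eps0 in auto)
        finally have "Ce 0 k * \<epsilon>\<^sup>2 * W ^ k \<le> C j k * \<epsilon> ^ (2 * (j + 1)) * W ^ k"
          by (rule mult_right_mono[OF _ W0])
        then show "cnorm \<Omega> UNIV (ents ?E) k \<le> C j k * (\<mu> 0 / \<mu> 1) ^ (2 * (j + 1)) * \<mu> 0 ^ k"
          using F7[of k] unfolding W_def \<epsilon>_def by simp
      qed (use F1 F2 F3 F4 F5 in auto)
    qed
  qed
qed

end
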